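(* In the setting below, the natural homomorphism $W(E_7)\to O(A_{L_+})$ is surjective. Moreover, the action of $O(A_{L_+})$ on $A_{L_+}$ is transitive on each of the sets $C_1=\{x: q_{L_+}(x)=-1/2\}$ and $C_2=\{x:q_{L_+}(x)=1/2\}$, and has exactly two orbits on each of the sets $C_3=\{x:q_{L_+}(x)=1\}$ and $C_4=\{x:q_{L_+}(x)=0\}$.
   Context: Let $C\subset\mathbb P^2$ be a smooth plane quartic $\{f=0\}$, $X_C=\{t^4=f\}\subset\mathbb P^3$ (a $K3$ surface), $\tau(x:y:z:t)=(x:y:z:-t)$, $S_C=X_C/\langle\tau\rangle$ (a Del Pezzo surface of degree 2, the blow-up of $\mathbb P^2$ in seven points, with $Pic(S_C)$ having basis $e_0,\dots,e_7$: $e_0$ the pull-back of a line, $e_i$ the exceptional curves; canonical class $k=-3e_0+e_1+\dots+e_7$), and $\pi_2:X_C\to S_C$ the quotient map. Let $L_+=\{x\in H^2(X_C,\mathbb Z):\tau^*x=x\}$, which equals $\pi_2^*Pic(S_C)$. $A_{L_+}=L_+^*/L_+\cong(\mathbb Z/2)^8$ is the discriminant group with discriminant quadratic form $q_{L_+}:A_{L_+}\to\mathbb Q/2\mathbb Z$, $q(x+L_+)=(x,x)\bmod 2\mathbb Z$, and $O(A_{L_+})$ is the group of automorphisms of $A_{L_+}$ preserving $q_{L_+}$. The Weyl group $W(E_7)$ of the root lattice $k^\perp\subset Pic(S_C)$ acts on $Pic(S_C)$ fixing $k$, hence on $L_+$ by pull-back, and thus on $A_{L_+}$. *)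

theory Defs
  imports Complex_Main
begin

(* Vectors of Q^8 = Pic(S_C) (x) Q, coordinates w.r.t. the basis e_0,...,e_7,
   stored as functions nat => rat vanishing at indices >= 8. *)
type_synonym qvec = "nat \<Rightarrow> rat"

definition supp8 :: "qvec \<Rightarrow> bool" where
  "supp8 x \<longleftrightarrow> (\<forall>i\<ge>8. x i = 0)"

definition pic_form :: "qvec \<Rightarrow> qvec \<Rightarrow> rat" where
  "pic_form x y = x 0 * y 0 - (\<Sum>i\<in>{1..7}. x i * y i)"

definition Pic :: "qvec set" where
  "Pic = {x. supp8 x \<and> (\<forall>i. x i \<in> \<int>)}"

definition canon :: qvec where
  "canon = (\<lambda>i. if i = 0 then -3 else if i \<le> 7 then 1 else 0)"

definition E7_roots :: "qvec set" where
  "E7_roots = {r \<in> Pic. pic_form r canon = 0 \<and> pic_form r r = -2}"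

(* reflection s_r(x) = x - 2 (x,r)/(r,r) r = x + (x,r) r  (linear, so it acts on Q^8) *)
definition refl :: "qvec \<Rightarrow> qvec \<Rightarrow> qvec" where
  "refl r x = (\<lambda>i. x i + pic_form x r * r i)"

inductive_set W_E7 :: "(qvec \<Rightarrow> qvec) set" where
  W_id: "id \<in> W_E7"
| W_step: "r \<in> E7_roots \<Longrightarrow> w \<in> W_E7 \<Longrightarrow> refl r \<circ> w \<in> W_E7"

(* L_+ = pi_2^* Pic(S_C); pi_2^* multiplies the intersection form by deg pi_2 = 2.
   We identify pi_2^* e_i with e_i, so L_+ has underlying group Pic and form 2(,). *)
definition Lp_form :: "qvec \<Rightarrow> qvec \<Rightarrow> rat" where
  "Lp_form x y = 2 * pic_form x y"

definition Lplus :: "qvec set" where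
  "Lplus = Pic"

definition Lplus_dual :: "qvec set" where
  "Lplus_dual = {x. supp8 x \<and> (\<forall>v\<in>Lplus. Lp_form x v \<in> \<int>)}"

definition coset :: "qvec \<Rightarrow> qvec set" where
  "coset x = {(\<lambda>i. x i + v i) | v. v \<in> Lplus}"

definition A_Lp :: "qvec set set" where
  "A_Lp = coset ` Lplus_dual"

definition A_add :: "qvec set \<Rightarrow> qvec set \<Rightarrow> qvec set" where
  "A_add a b = {(\<lambda>i. x i + y i) | x y. x \<in> a \<and> y \<in> b}"

definition q_is :: "qvec set \<Rightarrow> rat \<Rightarrow> bool" where
  "q_is a r \<longleftrightarrow> (\<exists>x\<in>a. \<exists>k::int. Lp_form x x = r + 2 * of_int k)"

definition O_A :: "(qvec set \<Rightarrow> qvec set) set" where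
  "O_A = {f. bij_betw f A_Lp A_Lp
            \<and> (\<forall>a\<in>A_Lp. \<forall>b\<in>A_Lp. f (A_add a b) = A_add (f a) (f b))
            \<and> (\<forall>a\<in>A_Lp. \<forall>r. q_is (f a) r \<longleftrightarrow> q_is a r)}"

definition W_act :: "(qvec \<Rightarrow> qvec) \<Rightarrow> qvec set \<Rightarrow> qvec set" where
  "W_act w a = w ` a"

definition O_orbit :: "qvec set \<Rightarrow> qvec set set" where
  "O_orbit a = {f a | f. f \<in> O_A}"

definition C_set :: "rat \<Rightarrow> qvec set set" where
  "C_set r = {a \<in> A_Lp. q_is a r}"

end

theory Submission
  imports Defs
begin

definition cnt :: "bool list \<Rightarrow> nat" where "cnt v = length (filter id v)"
definition xorv :: "bool list \<Rightarrow> bool list \<Rightarrow> bool list" where "xorv v w = map2 (\<noteq>) v w"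
definition dotv :: "bool list \<Rightarrow> bool list \<Rightarrow> bool" where "dotv p v = odd (cnt (map2 (\<and>) p v))"
definition tv :: "bool list \<Rightarrow> bool list \<Rightarrow> bool list" where "tv p v = (if dotv p v then xorv v p else v)"
definition Qm :: "bool list \<Rightarrow> nat" where "Qm v = (of_bool (hd v) + 3 * cnt (tl v)) mod 4"
definition uu :: "bool list" where "uu = replicate 8 True"
definition zeros :: "bool list" where "zeros = replicate 8 False"
definition ev :: "nat \<Rightarrow> bool list" where "ev k = map (\<lambda>i. i = k) [0..<8]"
definition onesk :: "nat \<Rightarrow> bool list" where "onesk k = replicate k False @ replicate (8 - k) True"
definition rootc :: "bool list \<Rightarrow> bool" where "rootc p = (length p = 8 \<and> Qm p = 2 \<and> p \<noteq> uu)"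
definition V8l :: "bool list list" where "V8l = List.n_lists 8 [False, True]"
definition bv :: "nat \<Rightarrow> bool list" where "bv n = map (\<lambda>i. odd (n div 2 ^ i)) [0..<8]"
definition applyT :: "bool list list \<Rightarrow> bool list \<Rightarrow> bool list" where "applyT vs v = foldr tv vs v"
definition adm :: "nat \<Rightarrow> bool list \<Rightarrow> bool" where "adm k p = (rootc p \<and> list_all Not (take k p))"
definition paths :: "bool list list \<Rightarrow> (bool list \<times> bool list) list \<Rightarrow> bool list \<Rightarrow> bool list \<Rightarrow> bool list list list" where
  "paths D P a b = [] # [xorv a b] # map (\<lambda>d. [xorv d b, xorv a d]) D
     @ map (\<lambda>(d1, d2). [xorv d2 b, xorv d1 d2, xorv a d1]) P"
definition reach :: "nat \<Rightarrow> bool list list \<Rightarrow> (bool list \<times> bool list) list \<Rightarrow> bool list \<Rightarrow> bool list \<Rightarrow> bool" where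
  "reach k D P a b = (\<exists>vs\<in>set (paths D P a b). applyT vs a = b \<and> list_all (adm k) vs)"
definition candk :: "nat \<Rightarrow> bool list \<Rightarrow> bool" where
  "candk k c = (Qm c = Qm (ev k) \<and> Qm (xorv c uu) = Qm (xorv (ev k) uu) \<and> c \<noteq> onesk k)"

definition V8 :: "bool list set" where "V8 = {v. length v = 8}"
definition good :: "(bool list \<Rightarrow> bool list) \<Rightarrow> bool" where
  "good g = ((\<forall>v\<in>V8. g v \<in> V8) \<and> (\<forall>a\<in>V8. \<forall>b\<in>V8. g (xorv a b) = xorv (g a) (g b))
     \<and> (\<forall>v\<in>V8. Qm (g v) = Qm v) \<and> inj_on g V8)"
definition Fq :: "nat \<Rightarrow> nat" where "Fq q = (if q = 0 then 2 else if q = 2 then 0 else q)"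
definition pfi :: "int list \<Rightarrow> int list \<Rightarrow> int" where
  "pfi x y = hd x * hd y - sum_list (map2 (*) (tl x) (tl y))"
definition canonl :: "int list" where "canonl = [-3, 1, 1, 1, 1, 1, 1, 1]"
definition isroot :: "int list \<Rightarrow> bool" where
  "isroot r = (length r = 8 \<and> pfi r canonl = 0 \<and> pfi r r = -2)"
definition lift :: "bool list \<Rightarrow> int list" where
  "lift p = (if hd p then map (\<lambda>i. if i = 0 then 1 else if p ! i then -1 else 0) [0..<8]
            else if cnt p = 6 then map (\<lambda>i. if i = 0 then 2 else if p ! i then -1 else 0) [0..<8]
            else map (\<lambda>i. if p ! i then (if i = hd (filter (\<lambda>j. p ! j) [0..<8]) then 1 else -1) else 0) [0..<8])"

lemma fc_step0: "\<forall>w\<in>set (List.n_lists 8 [False, True]). candk 0 (replicate 0 False @ w) \<longrightarrow> reach 0 [[False, False, False, False, False, True, True, True], [False, False, False, False, True, False, True, True], [False, False, False, True, False, True, False, True], [False, False, True, False, True, False, True, False]] [([True, False, False, False, True, True, True, True], [False, False, False, True, False, False, True, True])] (replicate 0 False @ w) (ev 0)"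
  by code_simp

lemma fc_step1: "\<forall>w\<in>set (List.n_lists 7 [False, True]). candk 1 (replicate 1 False @ w) \<longrightarrow> reach 1 [[False, False, False, False, False, False, False, True], [False, False, False, False, False, False, True, False], [False, False, False, False, False, True, False, False], [False, False, False, False, True, False, False, False], [False, False, False, True, False, False, False, False]] [] (replicate 1 False @ w) (ev 1)"
  by code_simp

lemma fc_step2: "\<forall>w\<in>set (List.n_lists 6 [False, True]). candk 2 (replicate 2 False @ w) \<longrightarrow> reach 2 [[False, False, False, True, True, True, True, True]] [] (replicate 2 False @ w) (ev 2)"
  by code_simp

lemma fc_step3: "\<forall>w\<in>set (List.n_lists 5 [False, True]). candk 3 (replicate 3 False @ w) \<longrightarrow> reach 3 [] [] (replicate 3 False @ w) (ev 3)"
  by code_simp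

lemma fc_step4: "\<forall>w\<in>set (List.n_lists 4 [False, True]). candk 4 (replicate 4 False @ w) \<longrightarrow> reach 4 [] [] (replicate 4 False @ w) (ev 4)"
  by code_simp

lemma fc_step5: "\<forall>w\<in>set (List.n_lists 3 [False, True]). candk 5 (replicate 5 False @ w) \<longrightarrow> reach 5 [] [] (replicate 5 False @ w) (ev 5)"
  by code_simp

lemma fc_step6: "\<forall>w\<in>set (List.n_lists 2 [False, True]). candk 6 (replicate 6 False @ w) \<longrightarrow> reach 6 [] [] (replicate 6 False @ w) (ev 6)"
  by code_simp

lemma fc_char1: "\<forall>x\<in>set V8l. Qm (xorv x uu) = Fq (Qm x)"
  by code_simp

lemma fc_char2: "\<forall>c\<in>set V8l. (\<forall>i\<in>set [0..<8]. Qm (xorv (ev i) c) = Fq (Qm (ev i))) \<longrightarrow> c = uu \<or> c = zeros"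
  by code_simp

lemma fc_onesk: "\<forall>k\<in>set [0..<8]. onesk k = foldr xorv (map ev [0..<k]) uu"
  by code_simp

lemma fc_evonesk: "\<forall>k\<in>set [0..<7]. ev k \<noteq> onesk k"
  by code_simp

lemma fc_basis: "\<forall>v\<in>set V8l. v = foldr xorv (map ev (filter (\<lambda>i. v ! i) [0..<8])) zeros"
  by code_simp

lemma fc_orb3: "\<forall>v\<in>set V8l. Qm v = 3 \<and> v \<noteq> uu \<and> v \<noteq> zeros \<longrightarrow> reach 0 [[False, False, False, False, False, False, False, True], [False, False, False, True, True, True, True, True], [True, False, True, False, False, False, False, True]] [([False, False, False, False, False, False, False, True], [False, True, False, True, True, True, True, False])] [False, True, False, False, False, False, False, False] v"
  by code_simp

lemma fc_orb1: "\<forall>v\<in>set V8l. Qm v = 1 \<and> v \<noteq> uu \<and> v \<noteq> zeros \<longrightarrow> reach 0 [[False, False, False, False, False, True, True, True], [False, False, False, False, True, False, True, True], [False, False, False, True, False, True, False, True], [False, False, True, False, True, False, True, False]] [([False, False, False, False, False, True, True, True], [True, False, False, True, True, False, True, True])] [True, False, False, False, False, False, False, False] v"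
  by code_simp

lemma fc_orb2: "\<forall>v\<in>set V8l. Qm v = 2 \<and> v \<noteq> uu \<and> v \<noteq> zeros \<longrightarrow> reach 0 [[False, False, True, False, False, False, False, True], [False, False, True, False, False, False, True, False], [False, False, True, False, False, True, False, False], [False, False, True, False, True, False, False, False], [False, False, True, True, False, False, False, False]] [] [False, True, True, False, False, False, False, False] v"
  by code_simp

lemma fc_orb0: "\<forall>v\<in>set V8l. Qm v = 0 \<and> v \<noteq> uu \<and> v \<noteq> zeros \<longrightarrow> reach 0 [[False, False, False, False, True, True, True, True], [False, False, False, True, False, True, True, True], [False, False, True, False, False, True, True, True], [False, False, True, True, True, False, False, True], [False, False, True, True, True, False, True, False]] [] [False, True, True, True, True, False, False, False] v"
  by code_simp

lemma fc_lift: "\<forall>p\<in>set V8l. rootc p \<longrightarrow> isroot (lift p) \<and> map odd (lift p) = p"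
  by code_simp

lemma len8: "length v = 8 \<Longrightarrow> \<exists>a0 a1 a2 a3 a4 a5 a6 a7. v = [a0,a1,a2,a3,a4,a5,a6,a7]"
  by (simp add: numeral_eq_Suc length_Suc_conv) blast

lemma len_xor[simp]: "length (xorv a b) = min (length a) (length b)"
  by (simp add: xorv_def)
lemma xorv_Cons[simp]: "xorv (x#xs) (y#ys) = (x \<noteq> y) # xorv xs ys" by (simp add: xorv_def)
lemma xorv_Nil[simp]: "xorv [] ys = []" "xorv xs [] = []" by (simp_all add: xorv_def)
lemma xorv_comm: "xorv a b = xorv b a"
  unfolding xorv_def by (induction a arbitrary: b) (auto simp: neq_Nil_conv zip_Cons1 split: list.splits)
lemma xorv_assoc: "xorv (xorv a b) c = xorv a (xorv b c)"
  by (induction a arbitrary: b c) (auto simp: xorv_def zip_Cons1 split: list.splits)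
lemma xorv_self: "xorv a a = replicate (length a) False"
  by (induction a) auto
lemma xorv_zero: "length a = n \<Longrightarrow> xorv a (replicate n False) = a"
  by (induction a arbitrary: n) (auto)
lemma map2_and_Cons[simp]: "map2 (\<and>) (x#xs) (y#ys) = (x \<and> y) # map2 (\<and>) xs ys" by simp
lemma cnt_Cons[simp]: "cnt (x#xs) = of_bool x + cnt xs" by (simp add: cnt_def)
lemma cnt_Nil[simp]: "cnt [] = 0" by (simp add: cnt_def)

lemma cnt_xor: "length a = length b \<Longrightarrow> cnt (xorv a b) + 2 * cnt (map2 (\<and>) a b) = cnt a + cnt b"
  by (induction a b rule: list_induct2) auto

lemma dot_xor: "length a = length b \<Longrightarrow> length p = length a \<Longrightarrow> dotv p (xorv a b) = (dotv p a \<noteq> dotv p b)"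
proof (induction a b arbitrary: p rule: list_induct2)
  case Nil then show ?case by (simp add: dotv_def)
next
  case (Cons x xs y ys)
  then obtain z zs where p: "p = z # zs" by (cases p) auto
  with Cons show ?case by (auto simp: dotv_def)
qed

lemma dot_comm: "dotv a b = dotv b a"
  unfolding dotv_def cnt_def
  by (induction a arbitrary: b) (auto split: list.splits simp: zip_Cons1 conj_commute)

lemma modfix: fixes N1 N2 m M :: nat
  assumes "N1 + 2 * m + 4 * M = N2"
  shows "N1 mod 4 = (N2 + 2 * of_bool (odd m)) mod 4"
proof -
  obtain K where K: "2 * K = m + of_bool (odd m)"
    by (cases "odd m") (auto elim!: oddE evenE intro: that[of "Suc _"] that)
  then have "N2 + 2 * of_bool (odd m) = N1 + 4 * (K + M)" using assms by simp
  then show ?thesis by (metis mod_mult_self2)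
qed
lemma even_from_mod: fixes s c :: nat assumes "s mod 4 = 2" "s = h + 3 * c" shows "even (h + c)"
proof -
  obtain q where "s = 4 * q + 2" using assms(1) by (metis div_mult_mod_eq mult.commute)
  then have "h + c + 2 * c = 2 * (2 * q + 1)" using assms(2) by simp
  then have "even (h + c + 2 * c)" by (metis dvd_triv_left)
  then show ?thesis by simp
qed

lemma mod3: "((A::nat) + B + C) mod n = (A mod n + B mod n + C) mod n"
proof -
  have "(A mod n + B mod n + C) mod n = ((A mod n + B mod n) mod n + C) mod n" by (rule mod_add_left_eq[symmetric])
  also have "\<dots> = ((A + B) mod n + C) mod n" by (simp only: mod_add_eq)
  also have "\<dots> = (A + B + C) mod n" by (rule mod_add_left_eq)
  finally show ?thesis by simp
qed

lemma Qm_xor: assumes "length a = length b" "a \<noteq> []"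
  shows "Qm (xorv a b) = (Qm a + Qm b + 2 * of_bool (dotv a b)) mod 4"
proof -
  obtain x xs where a: "a = x # xs" using assms by (cases a) auto
  obtain y ys where b: "b = y # ys" using assms by (cases b) auto
  have l: "length xs = length ys" using assms a b by simp
  have c: "cnt (xorv xs ys) + 2 * cnt (map2 (\<and>) xs ys) = cnt xs + cnt ys" using cnt_xor[OF l] .
  have hh: "of_bool (x \<noteq> y) + 2 * of_bool (x \<and> y) = (of_bool x + of_bool y :: nat)" by (cases x; cases y) auto
  have e: "(of_bool (x \<noteq> y) + 3 * cnt (xorv xs ys)) + 2 * (of_bool (x \<and> y) + cnt (map2 (\<and>) xs ys))
      + 4 * cnt (map2 (\<and>) xs ys) = (of_bool x + 3 * cnt xs) + (of_bool y + 3 * cnt ys)"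
  proof -
    have "3 * cnt (xorv xs ys) + 6 * cnt (map2 (\<and>) xs ys) = 3 * cnt xs + 3 * cnt ys" using c by linarith
    then show ?thesis using hh by simp
  qed
  have "Qm (xorv a b) = (of_bool (x \<noteq> y) + 3 * cnt (xorv xs ys)) mod 4"
    by (simp add: a b Qm_def)
  also have "\<dots> = ((of_bool x + 3 * cnt xs) + (of_bool y + 3 * cnt ys)
         + 2 * of_bool (odd (of_bool (x \<and> y) + cnt (map2 (\<and>) xs ys)))) mod 4"
    by (rule modfix[OF e])
  also have "\<dots> = (Qm a + Qm b + 2 * of_bool (dotv a b)) mod 4"
    unfolding a b Qm_def dotv_def by (simp only: list.sel map2_and_Cons cnt_Cons) (rule mod3)
  finally show ?thesis .
qed

lemma dot_self: "dotv a a = odd (cnt a)"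
  by (induction a) (auto simp: dotv_def)

lemma rootc_even: "rootc p \<Longrightarrow> \<not> dotv p p"
proof -
  assume r: "rootc p"
  then have "p \<noteq> []" by (auto simp: rootc_def)
  then obtain x xs where p: "p = x # xs" by (cases p) auto
  have "(of_bool x + 3 * cnt xs) mod 4 = (2::nat)" using r p by (simp add: rootc_def Qm_def)
  then have "even (of_bool x + cnt xs)" using even_from_mod by blast
  then show ?thesis unfolding dot_self p by simp
qed

lemma len_tv[simp]: "length p = length v \<Longrightarrow> length (tv p v) = length v"
  by (simp add: tv_def)

lemma rootc_len: "rootc p \<Longrightarrow> length p = 8" by (simp add: rootc_def)

lemma tv_tv: assumes "rootc p" "length v = 8" shows "tv p (tv p v) = v"
proof -
  have lp: "length p = 8" using assms rootc_len by auto
  show ?thesis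
  proof (cases "dotv p v")
    case True
    have "dotv p (xorv v p) = (dotv p v \<noteq> dotv p p)" using dot_xor[of v p p] lp assms by simp
    then have "dotv p (xorv v p)" using True rootc_even[OF assms(1)] by simp
    then show ?thesis using True lp assms
      by (simp add: tv_def xorv_assoc xorv_self xorv_zero)
  next
    case False then show ?thesis by (simp add: tv_def)
  qed
qed

lemma tv_xor: assumes "length p = 8" "length a = 8" "length b = 8"
  shows "tv p (xorv a b) = xorv (tv p a) (tv p b)"
proof -
  have d: "dotv p (xorv a b) = (dotv p a \<noteq> dotv p b)" using dot_xor assms by simp
  have e1: "xorv (xorv a p) b = xorv (xorv a b) p" by (metis xorv_assoc xorv_comm)
  have e2: "xorv a (xorv b p) = xorv (xorv a b) p" by (metis xorv_assoc)
  have e3: "xorv (xorv a p) (xorv b p) = xorv a b"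
  proof -
    have "xorv (xorv a p) (xorv b p) = xorv a (xorv p (xorv p b))" by (simp add: xorv_assoc xorv_comm[of b p])
    also have "\<dots> = xorv a (xorv (replicate 8 False) b)" using assms(1) by (simp add: xorv_assoc[symmetric] xorv_self)
    also have "\<dots> = xorv a b" using assms(3) by (simp add: xorv_comm[of "replicate 8 False"] xorv_zero)
    finally show ?thesis .
  qed
  show ?thesis using d e1 e2 e3 by (auto simp: tv_def)
qed

lemma Qm_lt: "Qm v < 4" by (simp add: Qm_def)

lemma Qm_tv: assumes "rootc p" "length v = 8" shows "Qm (tv p v) = Qm v"
proof (cases "dotv p v")
  case True
  have lp: "length p = 8" using assms rootc_len by auto
  have vn: "v \<noteq> []" using assms by auto
  have q2: "Qm p = 2" using assms(1) by (simp add: rootc_def)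
  have dv: "dotv v p" using True dot_comm by metis
  have "Qm (xorv v p) = (Qm v + Qm p + 2 * of_bool (dotv v p)) mod 4"
    using Qm_xor[of v p] lp assms(2) vn by simp
  also have "\<dots> = (Qm v + 4) mod 4" using q2 dv by simp
  also have "\<dots> = Qm v" using Qm_lt[of v] by simp
  finally show ?thesis using True by (simp add: tv_def)
next
  case False then show ?thesis by (simp add: tv_def)
qed

lemma map2_and_True: "length p = n \<Longrightarrow> map2 (\<and>) p (replicate n True) = p"
  by (induction p arbitrary: n) auto
lemma map2_and_False: "length p = n \<Longrightarrow> map2 (\<and>) p (replicate n False) = replicate n False"
  by (induction p arbitrary: n) auto

lemma tv_uu: assumes "rootc p" shows "tv p uu = uu"
proof -
  have "dotv p uu = odd (cnt p)" using rootc_len[OF assms] by (simp add: dotv_def uu_def map2_and_True)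
  then have "\<not> dotv p uu" using rootc_even[OF assms] dot_self[of p] by simp
  then show ?thesis by (simp add: tv_def)
qed

lemma cnt_repF: "cnt (replicate n False) = 0" by (induction n) auto

lemma tv_zeros: "rootc p \<Longrightarrow> tv p zeros = zeros"
  using rootc_len[of p] by (simp add: tv_def zeros_def dotv_def map2_and_False cnt_repF)

lemma filt_eq: "filter (\<lambda>i. i = j \<and> P i) [0..<n] = (if j < n \<and> P j then [j] else [])"
  by (induction n) auto

lemma map2_ev: "length p = 8 \<Longrightarrow> map2 (\<and>) p (ev j) = map (\<lambda>i. i = j \<and> p ! i) [0..<8]"
  by (rule nth_equalityI) (auto simp: ev_def)

lemma dot_ev: assumes "length p = 8" "j < 8" shows "dotv p (ev j) = p ! j"
proof -
  have "cnt (map2 (\<and>) p (ev j)) = (if p ! j then 1 else 0)"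
    using assms by (simp add: map2_ev cnt_def filter_map comp_def filt_eq del: upt_Suc)
  then show ?thesis by (simp add: dotv_def)
qed

lemma tv_ev: "rootc p \<Longrightarrow> j < 8 \<Longrightarrow> \<not> p ! j \<Longrightarrow> tv p (ev j) = ev j"
  using dot_ev[of p j] rootc_len[of p] by (simp add: tv_def)

lemma V8l_set: "set V8l = V8"
  by (auto simp: V8l_def V8_def set_n_lists)

lemma finite_V8: "finite V8" using V8l_set by (metis List.finite_set)

lemma len_applyT: "list_all rootc vs \<Longrightarrow> length v = 8 \<Longrightarrow> length (applyT vs v) = 8"
  by (induction vs) (auto simp: applyT_def rootc_len)

lemma applyT_Cons[simp]: "applyT (p # vs) v = tv p (applyT vs v)" by (simp add: applyT_def)
lemma applyT_Nil[simp]: "applyT [] v = v" by (simp add: applyT_def)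
lemma applyT_append: "applyT (xs @ ys) v = applyT xs (applyT ys v)" by (simp add: applyT_def)

lemma applyT_xor: "list_all rootc vs \<Longrightarrow> length a = 8 \<Longrightarrow> length b = 8 \<Longrightarrow>
   applyT vs (xorv a b) = xorv (applyT vs a) (applyT vs b)"
  by (induction vs) (auto simp: tv_xor rootc_len len_applyT)

lemma Qm_applyT: "list_all rootc vs \<Longrightarrow> length v = 8 \<Longrightarrow> Qm (applyT vs v) = Qm v"
  by (induction vs) (auto simp: Qm_tv len_applyT)

lemma applyT_uu: "list_all rootc vs \<Longrightarrow> applyT vs uu = uu"
  by (induction vs) (auto simp: tv_uu)

lemma applyT_zeros: "list_all rootc vs \<Longrightarrow> applyT vs zeros = zeros"
  by (induction vs) (auto simp: tv_zeros)

lemma applyT_rev: "list_all rootc vs \<Longrightarrow> length v = 8 \<Longrightarrow> applyT (rev vs) (applyT vs v) = v"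
  by (induction vs) (auto simp: applyT_append tv_tv len_applyT)

lemma adm_rootc: "adm k p \<Longrightarrow> rootc p" by (simp add: adm_def)

lemma adm_nth: "adm k p \<Longrightarrow> j < k \<Longrightarrow> j < 8 \<Longrightarrow> \<not> p ! j"
  using rootc_len[of p] by (auto simp: adm_def list_all_length)
  
lemma applyT_ev: "list_all (adm k) vs \<Longrightarrow> j < k \<Longrightarrow> k \<le> 8 \<Longrightarrow> applyT vs (ev j) = ev j"
  by (induction vs) (auto simp: tv_ev adm_rootc adm_nth)

lemma len_ev[simp]: "length (ev k) = 8" by (simp add: ev_def)
lemma len_uu[simp]: "length uu = 8" by (simp add: uu_def)
lemma len_zeros[simp]: "length zeros = 8" by (simp add: zeros_def)

lemma good_comp: assumes "good g" "list_all rootc vs" shows "good (\<lambda>v. applyT vs (g v))"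
proof -
  have g: "\<forall>v\<in>V8. g v \<in> V8" "\<forall>a\<in>V8. \<forall>b\<in>V8. g (xorv a b) = xorv (g a) (g b)"
     "\<forall>v\<in>V8. Qm (g v) = Qm v" "inj_on g V8" using assms(1) by (auto simp: good_def)
  have inj: "inj_on (applyT vs) V8"
    by (rule inj_on_inverseI[where g = "applyT (rev vs)"]) (simp add: applyT_rev assms(2) V8_def)
  show ?thesis unfolding good_def
  proof (intro conjI ballI)
    fix v assume "v \<in> V8" then show "applyT vs (g v) \<in> V8" using g(1) len_applyT[OF assms(2)] by (auto simp: V8_def)
  next
    fix a b assume "a \<in> V8" "b \<in> V8"
    then show "applyT vs (g (xorv a b)) = xorv (applyT vs (g a)) (applyT vs (g b))"
      using g(1,2) applyT_xor[OF assms(2)] by (auto simp: V8_def)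
  next
    fix v assume "v \<in> V8" then show "Qm (applyT vs (g v)) = Qm v" using g(1,3) Qm_applyT[OF assms(2)] by (auto simp: V8_def)
  next
    show "inj_on (\<lambda>v. applyT vs (g v)) V8"
    proof -
      have "inj_on (applyT vs) (g ` V8)" by (rule inj_on_subset[OF inj]) (use g(1) in auto)
      then show ?thesis using comp_inj_on[OF g(4), of "applyT vs"] by (simp add: comp_def)
    qed
  qed
qed

lemma good_zeros: assumes "good g" shows "g zeros = zeros"
proof -
  have z: "zeros \<in> V8" by (simp add: V8_def)
  have "xorv zeros zeros = zeros" by (simp add: xorv_self zeros_def)
  then have "g zeros = xorv (g zeros) (g zeros)" using assms z by (metis good_def)
  also have "\<dots> = zeros" using assms z by (simp add: good_def xorv_self V8_def zeros_def)
  finally show ?thesis .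
qed

lemma foldr_xor_V8: "\<forall>x\<in>set xs. x \<in> V8 \<Longrightarrow> z \<in> V8 \<Longrightarrow> foldr xorv xs z \<in> V8"
  by (induction xs) (auto simp: V8_def)

lemma good_foldr: assumes "good g" "\<forall>x\<in>set xs. x \<in> V8" "z \<in> V8"
  shows "g (foldr xorv xs z) = foldr xorv (map g xs) (g z)"
  using assms(2,3)
proof (induction xs)
  case Nil then show ?case by simp
next
  case (Cons x xs)
  then have "foldr xorv xs z \<in> V8" by (intro foldr_xor_V8) auto
  then show ?case using Cons assms(1) unfolding good_def by auto
qed

lemma good_surj: "good g \<Longrightarrow> g ` V8 = V8"
  by (rule endo_inj_surj[OF finite_V8]) (auto simp: good_def)

lemma good_uu: assumes "good g" shows "g uu = uu"
proof -
  have gu: "g uu \<in> V8" using assms by (auto simp: good_def V8_def)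
  have "\<forall>i\<in>set [0..<8]. Qm (xorv (ev i) (g uu)) = Fq (Qm (ev i))"
  proof
    fix i assume "i \<in> set [0..<8]"
    then have "ev i \<in> V8" by (simp add: V8_def)
    then obtain x where x: "x \<in> V8" "g x = ev i" using good_surj[OF assms] by (metis imageE)
    have u: "uu \<in> V8" by (simp add: V8_def)
    have "g (xorv x uu) = xorv (g x) (g uu)" using x u assms by (simp add: good_def)
    then have "Qm (xorv (ev i) (g uu)) = Qm (g (xorv x uu))" using x by simp
    also have "\<dots> = Qm (xorv x uu)"
    proof -
      have xv: "xorv x uu \<in> V8" using x by (simp add: V8_def)
      then show ?thesis using assms unfolding good_def by blast
    qed
    also have "\<dots> = Fq (Qm x)" using fc_char1 x V8l_set by auto
    also have "\<dots> = Fq (Qm (ev i))" using x assms unfolding good_def by metis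
    finally show "Qm (xorv (ev i) (g uu)) = Fq (Qm (ev i))" .
  qed
  then have "g uu = uu \<or> g uu = zeros" using fc_char2 gu V8l_set by auto
  moreover have "g uu \<noteq> zeros"
  proof
    assume "g uu = zeros"
    then have "g uu = g zeros" using good_zeros[OF assms] by simp
    then have "uu = zeros" using assms by (auto simp: good_def V8_def inj_on_def)
    then show False by (simp add: uu_def zeros_def)
  qed
  ultimately show ?thesis by blast
qed

lemma fc_step: assumes "k < 7" "w \<in> set (List.n_lists (8-k) [False,True])" "candk k (replicate k False @ w)"
  shows "\<exists>vs. applyT vs (replicate k False @ w) = ev k \<and> list_all (adm k) vs"
proof -
  have "k = 0 \<or> k = 1 \<or> k = 2 \<or> k = 3 \<or> k = 4 \<or> k = 5 \<or> k = 6" using assms(1) by auto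
  moreover have "k = 0 \<Longrightarrow> ?thesis" using fc_step0 assms unfolding reach_def by auto
  moreover have "k = 1 \<Longrightarrow> ?thesis" using fc_step1 assms unfolding reach_def by auto
  moreover have "k = 2 \<Longrightarrow> ?thesis" using fc_step2 assms unfolding reach_def by auto
  moreover have "k = 3 \<Longrightarrow> ?thesis" using fc_step3 assms unfolding reach_def by auto
  moreover have "k = 4 \<Longrightarrow> ?thesis" using fc_step4 assms unfolding reach_def by auto
  moreover have "k = 5 \<Longrightarrow> ?thesis" using fc_step5 assms unfolding reach_def by auto
  moreover have "k = 6 \<Longrightarrow> ?thesis" using fc_step6 assms unfolding reach_def by auto
  ultimately show ?thesis by blast
qed

lemma mod4_ne: "((X::nat) + 2) mod 4 \<noteq> X mod 4"
proof
  assume "(X + 2) mod 4 = X mod 4"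
  then have "4 dvd (X + 2 - X)" using mod_eq_dvd_iff_nat[of X "X + 2" 4] by simp
  then show False by simp
qed

lemma good_fix_foldr: assumes "good g" "z \<in> V8" "g z = z" "\<forall>x\<in>set xs. x \<in> V8 \<and> g x = x"
  shows "g (foldr xorv xs z) = foldr xorv xs z"
proof -
  have "g (foldr xorv xs z) = foldr xorv (map g xs) (g z)" using good_foldr[OF assms(1) _ assms(2)] assms(4) by auto
  also have "map g xs = xs" using assms(4) by (induction xs) auto
  finally show ?thesis using assms(3) by simp
qed

lemma onesk7: "onesk 7 = ev 7" by code_simp

lemma chain: "n \<le> 7 \<Longrightarrow> good g \<Longrightarrow> g uu = uu \<Longrightarrow> (\<forall>j<7-n. g (ev j) = ev j) \<Longrightarrow>
   \<exists>vs. list_all rootc vs \<and> (\<forall>v\<in>V8. g v = applyT vs v)"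
proof (induction n arbitrary: g)
  case 0
  have uV: "uu \<in> V8" by (simp add: V8_def)
  have zV: "zeros \<in> V8" by (simp add: V8_def)
  have fix7: "\<forall>x\<in>set (map ev [0..<7]). x \<in> V8 \<and> g x = x" using 0 by (auto simp: V8_def)
  have "g (onesk 7) = onesk 7" using fc_onesk good_fix_foldr[OF 0(2) uV 0(3) fix7] by simp
  then have "g (ev 7) = ev 7" by (simp add: onesk7)
  have fix8: "\<forall>j<8. g (ev j) = ev j"
  proof (intro allI impI)
    fix j :: nat assume "j < 8" then have "j < 7 \<or> j = 7" by auto
    then show "g (ev j) = ev j" using 0 \<open>g (ev 7) = ev 7\<close> by auto
  qed
  have "\<forall>v\<in>V8. g v = v"
  proof
    fix v assume v: "v \<in> V8"
    let ?xs = "map ev (filter (\<lambda>i. v ! i) [0..<8])"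
    have xs: "\<forall>x\<in>set ?xs. x \<in> V8 \<and> g x = x" using fix8 by (auto simp: V8_def)
    have "v = foldr xorv ?xs zeros" using fc_basis v V8l_set by auto
    moreover have "g (foldr xorv ?xs zeros) = foldr xorv ?xs zeros"
      using good_fix_foldr[OF 0(2) zV good_zeros[OF 0(2)] xs] .
    ultimately show "g v = v" by simp
  qed
  then show ?case by (intro exI[of _ "[]"]) simp
next
  case (Suc n)
  define k where "k = 6 - n"
  have k7: "k < 7" and kk: "7 - Suc n = k" and kk1: "7 - n = Suc k" using Suc.prems(1) by (auto simp: k_def)
  have gg: "\<forall>v\<in>V8. g v \<in> V8" "\<forall>a\<in>V8. \<forall>b\<in>V8. g (xorv a b) = xorv (g a) (g b)"
     "\<forall>v\<in>V8. Qm (g v) = Qm v" "inj_on g V8" using Suc.prems(2) by (auto simp: good_def)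
  have fixj: "\<forall>j<k. g (ev j) = ev j" using Suc.prems(4) kk by simp
  define c where "c = g (ev k)"
  have evV: "\<And>j. ev j \<in> V8" by (simp add: V8_def)
  have uV: "uu \<in> V8" by (simp add: V8_def)
  have cV: "c \<in> V8" using gg(1) evV by (simp add: c_def)
  have cl: "length c = 8" using cV by (simp add: V8_def)
  have Qc: "Qm c = Qm (ev k)" using gg(3) evV by (simp add: c_def)
  have cpre: "\<not> c ! j" if j: "j < k" for j
  proof
    assume cj: "c ! j"
    have "g (xorv (ev k) (ev j)) = xorv c (ev j)" using gg(2) evV fixj j by (simp add: c_def)
    moreover have "xorv (ev k) (ev j) \<in> V8" by (simp add: V8_def)
    ultimately have e: "Qm (xorv c (ev j)) = Qm (xorv (ev k) (ev j))" using gg(3) by metis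
    have "Qm (xorv c (ev j)) = (Qm c + Qm (ev j) + 2 * of_bool (dotv c (ev j))) mod 4"
      using Qm_xor[of c "ev j"] cl by fastforce
    also have "\<dots> = (Qm (ev k) + Qm (ev j) + 2) mod 4" using dot_ev[OF cl, of j] cj j k7 Qc by simp
    finally have e1: "Qm (xorv c (ev j)) = (Qm (ev k) + Qm (ev j) + 2) mod 4" .
    have "Qm (xorv (ev k) (ev j)) = (Qm (ev k) + Qm (ev j) + 2 * of_bool (dotv (ev k) (ev j))) mod 4"
      using Qm_xor[of "ev k" "ev j"] by (fastforce simp: ev_def)
    also have "\<dots> = (Qm (ev k) + Qm (ev j)) mod 4" using dot_ev[of "ev k" j] j k7 by (simp add: ev_def)
    finally show False using e e1 mod4_ne by metis
  qed
  have cform: "c = replicate k False @ drop k c"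
    by (rule nth_equalityI) (use cl k7 cpre in \<open>auto simp: nth_append\<close>)
  have Qcu: "Qm (xorv c uu) = Qm (xorv (ev k) uu)"
  proof -
    have "g (xorv (ev k) uu) = xorv c uu" using gg(2) evV uV Suc.prems(3) by (simp add: c_def)
    moreover have "xorv (ev k) uu \<in> V8" by (simp add: V8_def)
    ultimately show ?thesis using gg(3) by metis
  qed
  have cne: "c \<noteq> onesk k"
  proof
    assume co: "c = onesk k"
    have fk: "\<forall>x\<in>set (map ev [0..<k]). x \<in> V8 \<and> g x = x" using fixj by (auto simp: V8_def)
    have "g (onesk k) = onesk k" using fc_onesk k7 good_fix_foldr[OF Suc.prems(2) uV Suc.prems(3) fk] by simp
    then have "g (ev k) = g (onesk k)" using co by (simp add: c_def)
    moreover have "onesk k \<in> V8" using k7 by (simp add: V8_def onesk_def)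
    ultimately have "ev k = onesk k" using gg(4) evV by (metis inj_onD)
    then show False using fc_evonesk k7 by simp
  qed
  have wset: "drop k c \<in> set (List.n_lists (8-k) [False,True])"
    using cl by (auto simp: set_n_lists)
  have cand: "candk k (replicate k False @ drop k c)" using Qc Qcu cne cform by (simp add: candk_def)
  obtain vs1 where vs1: "applyT vs1 c = ev k" "list_all (adm k) vs1"
    using fc_step[OF k7 wset cand] cform by metis
  have r1: "list_all rootc vs1" using vs1(2) adm_rootc by (auto simp: list_all_iff)
  define g' where "g' = (\<lambda>v. applyT vs1 (g v))"
  have good': "good g'" unfolding g'_def by (rule good_comp[OF Suc.prems(2) r1])
  have u': "g' uu = uu" using Suc.prems(3) applyT_uu[OF r1] by (simp add: g'_def)
  have f': "\<forall>j<7-n. g' (ev j) = ev j"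
  proof (intro allI impI)
    fix j assume "j < 7 - n"
    then have "j < k \<or> j = k" using kk1 by auto
    then show "g' (ev j) = ev j"
    proof
      assume "j < k" then show ?thesis using fixj applyT_ev[OF vs1(2)] k7 by (simp add: g'_def)
    next
      assume "j = k" then show ?thesis using vs1(1) by (simp add: g'_def c_def)
    qed
  qed
  obtain vs2 where vs2: "list_all rootc vs2" "\<forall>v\<in>V8. g' v = applyT vs2 v"
    using Suc.IH[OF _ good' u' f'] Suc.prems(1) by auto
  have "\<forall>v\<in>V8. g v = applyT (rev vs1 @ vs2) v"
  proof
    fix v assume v: "v \<in> V8"
    have "g v = applyT (rev vs1) (applyT vs1 (g v))" using applyT_rev[OF r1] gg(1) v by (simp add: V8_def)
    also have "\<dots> = applyT (rev vs1) (applyT vs2 v)" using vs2(2) v by (simp add: g'_def)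
    finally show "g v = applyT (rev vs1 @ vs2) v" by (simp add: applyT_append)
  qed
  moreover have "list_all rootc (rev vs1 @ vs2)" using r1 vs2(1) by simp
  ultimately show ?case by blast
qed

theorem model: "good g \<Longrightarrow> \<exists>vs. list_all rootc vs \<and> (\<forall>v\<in>V8. g v = applyT vs v)"
  using chain[of 7 g] good_uu by auto

definition hq :: "bool list \<Rightarrow> qvec" where
  "hq v = (\<lambda>i. if i < length v \<and> v ! i then 1/2 else 0)"
definition Hc :: "bool list \<Rightarrow> qvec set" where "Hc v = coset (hq v)"
definition ofl :: "int list \<Rightarrow> qvec" where
  "ofl r = (\<lambda>i. if i < length r then of_int (r ! i) else 0)"

lemma pic8: "pic_form x y = x 0 * y 0 - (x 1 * y 1 + x 2 * y 2 + x 3 * y 3 + x 4 * y 4 + x 5 * y 5 + x 6 * y 6 + x 7 * y 7)"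
proof -
  have "{1..7::nat} = {1,2,3,4,5,6,7}" by auto
  then show ?thesis by (simp add: pic_form_def add.assoc)
qed

lemma pic_sym: "pic_form x y = pic_form y x" by (simp add: pic8 mult.commute)

lemma pic_lin: "pic_form (\<lambda>i. x i + c * y i) z = pic_form x z + c * pic_form y z"
  by (simp add: pic8 algebra_simps)
lemma pic_add: "pic_form (\<lambda>i. x i + y i) z = pic_form x z + pic_form y z"
  by (simp add: pic8 algebra_simps)

lemma Pic_add: "x \<in> Pic \<Longrightarrow> y \<in> Pic \<Longrightarrow> (\<lambda>i. x i + y i) \<in> Pic"
  by (auto simp: Pic_def supp8_def)
lemma Pic_diff: "x \<in> Pic \<Longrightarrow> y \<in> Pic \<Longrightarrow> (\<lambda>i. x i - y i) \<in> Pic"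
  by (auto simp: Pic_def supp8_def)
lemma Pic_zero: "(\<lambda>i. 0) \<in> Pic" by (auto simp: Pic_def supp8_def)
lemma Pic_scale: "c \<in> \<int> \<Longrightarrow> x \<in> Pic \<Longrightarrow> (\<lambda>i. c * x i) \<in> Pic"
  by (auto simp: Pic_def supp8_def)
lemma Pic_form: "x \<in> Pic \<Longrightarrow> y \<in> Pic \<Longrightarrow> pic_form x y \<in> \<int>"
  by (auto simp: Pic_def pic8 intro!: Ints_add Ints_mult Ints_diff)

lemma coset_mem: "z \<in> coset x \<longleftrightarrow> (\<lambda>i. z i - x i) \<in> Pic"
proof
  assume "z \<in> coset x"
  then obtain v where "v \<in> Pic" "z = (\<lambda>i. x i + v i)" by (auto simp: coset_def Lplus_def)
  moreover then have "(\<lambda>i. z i - x i) = v" by auto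
  ultimately show "(\<lambda>i. z i - x i) \<in> Pic" by simp
next
  assume "(\<lambda>i. z i - x i) \<in> Pic"
  then show "z \<in> coset x" unfolding coset_def Lplus_def
    by (intro CollectI exI[of _ "\<lambda>i. z i - x i"]) auto
qed

lemma coset_eq: "coset x = coset y \<longleftrightarrow> (\<lambda>i. x i - y i) \<in> Pic"
proof
  assume "coset x = coset y"
  moreover have "x \<in> coset x" using Pic_zero by (simp add: coset_mem)
  ultimately show "(\<lambda>i. x i - y i) \<in> Pic" by (simp add: coset_mem)
next
  assume a: "(\<lambda>i. x i - y i) \<in> Pic"
  show "coset x = coset y"
  proof (rule set_eqI)
    fix z
    have "(\<lambda>i. z i - y i) = (\<lambda>i. (\<lambda>i. z i - x i) i + (\<lambda>i. x i - y i) i)" by auto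
    moreover have "(\<lambda>i. z i - x i) = (\<lambda>i. (\<lambda>i. z i - y i) i - (\<lambda>i. x i - y i) i)" by auto
    ultimately show "z \<in> coset x \<longleftrightarrow> z \<in> coset y" unfolding coset_mem using a Pic_add Pic_diff by metis
  qed
qed

lemma half_Ints: "(of_int a / 2 :: rat) \<in> \<int> \<longleftrightarrow> even a"
proof
  assume "of_int a / 2 \<in> (\<int> :: rat set)"
  then obtain n where "of_int a / 2 = (of_int n :: rat)" by (auto elim: Ints_cases)
  then have "(of_int a :: rat) = of_int (2 * n)" by simp
  then have "a = 2 * n" by (simp only: of_int_eq_iff)
  then show "even a" by simp
next
  assume "even a"
  then obtain n where "a = 2 * n" by auto
  then show "of_int a / 2 \<in> (\<int> :: rat set)" by simp
qed

lemma delta_Pic: "i < 8 \<Longrightarrow> (\<lambda>j. if j = i then 1 else 0) \<in> Pic"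
  by (auto simp: Pic_def supp8_def)

lemma dual_char: "x \<in> Lplus_dual \<longleftrightarrow> supp8 x \<and> (\<forall>i. 2 * x i \<in> \<int>)"
proof
  assume d: "x \<in> Lplus_dual"
  then have s: "supp8 x" by (simp add: Lplus_dual_def)
  have "2 * x i \<in> \<int>" for i
  proof (cases "i < 8")
    case True
    have "Lp_form x (\<lambda>j. if j = i then 1 else 0) \<in> \<int>" using d delta_Pic[OF True] by (simp add: Lplus_dual_def Lplus_def)
    moreover have "i = 0 \<or> i = 1 \<or> i = 2 \<or> i = 3 \<or> i = 4 \<or> i = 5 \<or> i = 6 \<or> i = 7" using True by auto
    then have "Lp_form x (\<lambda>j. if j = i then 1 else 0) = (if i = 0 then 2 * x i else - (2 * x i))"
      by (elim disjE) (simp_all add: Lp_form_def pic8)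
    ultimately have "(if i = 0 then 2 * x i else - (2 * x i)) \<in> \<int>" by simp
    then show ?thesis by (cases "i = 0") (simp_all add: minus_in_Ints_iff)
  next
    case False then show ?thesis using s by (simp add: supp8_def)
  qed
  then show "supp8 x \<and> (\<forall>i. 2 * x i \<in> \<int>)" using s by simp
next
  assume a: "supp8 x \<and> (\<forall>i. 2 * x i \<in> \<int>)"
  have "Lp_form x v \<in> \<int>" if v: "v \<in> Pic" for v
  proof -
    have "Lp_form x v = (2 * x 0) * v 0 - ((2 * x 1) * v 1 + (2 * x 2) * v 2 + (2 * x 3) * v 3 + (2 * x 4) * v 4
       + (2 * x 5) * v 5 + (2 * x 6) * v 6 + (2 * x 7) * v 7)" by (simp add: Lp_form_def pic8 algebra_simps)
    also have "\<dots> \<in> \<int>" using a v by (auto simp: Pic_def intro!: Ints_add Ints_mult Ints_diff)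
    finally show ?thesis .
  qed
  then show "x \<in> Lplus_dual" using a by (simp add: Lplus_dual_def Lplus_def)
qed

lemma hq_alt: "hq v i = (if i < length v then of_bool (v ! i) / 2 else 0)"
  by (simp add: hq_def)

lemma hq_dual: "length v = 8 \<Longrightarrow> hq v \<in> Lplus_dual"
  by (auto simp: dual_char supp8_def hq_def)

lemma half_not_Int: "(1/2 :: rat) \<notin> \<int>"
  using half_Ints[of 1] by simp
lemma mhalf_not_Int: "(-1/2 :: rat) \<notin> \<int>"
  using half_Ints[of "-1"] by simp

lemma dual_coset_Hc: assumes "x \<in> Lplus_dual"
  shows "coset x = Hc (map (\<lambda>i. odd \<lfloor>2 * x i\<rfloor>) [0..<8])"
proof -
  let ?p = "map (\<lambda>i. odd \<lfloor>2 * x i\<rfloor>) [0..<8]"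
  have s: "supp8 x" and ii: "\<And>i. 2 * x i \<in> \<int>" using assms by (auto simp: dual_char)
  have "(\<lambda>i. x i - hq ?p i) \<in> Pic"
    unfolding Pic_def
  proof (intro CollectI conjI allI)
    show "supp8 (\<lambda>i. x i - hq ?p i)" using s by (simp add: supp8_def hq_def)
  next
    fix i
    show "x i - hq ?p i \<in> \<int>"
    proof (cases "i < 8")
      case True
      obtain n where n: "2 * x i = of_int n" using ii[of i] by (auto elim: Ints_cases)
      have fl: "\<lfloor>2 * x i\<rfloor> = n" using n by simp
      have "x i - hq ?p i = of_int (n - of_bool (odd n)) / 2"
        using True n fl by (simp add: hq_def field_simps)
      also have "\<dots> \<in> \<int>" by (subst half_Ints) simp
      finally show ?thesis .
    next
      case False then show ?thesis using s by (simp add: supp8_def hq_def)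
    qed
  qed
  then show ?thesis by (simp add: Hc_def coset_eq)
qed

lemma A_Lp_eq: "A_Lp = Hc ` V8"
proof
  show "A_Lp \<subseteq> Hc ` V8"
  proof
    fix a assume "a \<in> A_Lp"
    then obtain x where x: "x \<in> Lplus_dual" "a = coset x" by (auto simp: A_Lp_def)
    then show "a \<in> Hc ` V8" using dual_coset_Hc[OF x(1)] by (auto simp: V8_def)
  qed
next
  show "Hc ` V8 \<subseteq> A_Lp" using hq_dual by (auto simp: A_Lp_def Hc_def V8_def)
qed

lemma Hc_inj: "inj_on Hc V8"
proof (rule inj_onI)
  fix v w assume v: "v \<in> V8" and w: "w \<in> V8" and e: "Hc v = Hc w"
  then have d: "(\<lambda>i. hq v i - hq w i) \<in> Pic" by (simp add: Hc_def coset_eq)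
  show "v = w"
  proof (rule nth_equalityI)
    show "length v = length w" using v w by (simp add: V8_def)
  next
    fix i assume "i < length v"
    then have i: "i < 8" "i < length w" using v w by (auto simp: V8_def)
    have "hq v i - hq w i \<in> \<int>" using d by (auto simp: Pic_def)
    then show "v ! i = w ! i" using i v half_not_Int mhalf_not_Int
      by (cases "v ! i"; cases "w ! i") (auto simp: hq_def V8_def)
  qed
qed

lemma Hc_bij: "bij_betw Hc V8 A_Lp"
  using Hc_inj A_Lp_eq by (simp add: bij_betw_def)

lemma A_add_coset: "A_add (coset x) (coset y) = coset (\<lambda>i. x i + y i)"
proof (rule set_eqI)
  fix z
  show "z \<in> A_add (coset x) (coset y) \<longleftrightarrow> z \<in> coset (\<lambda>i. x i + y i)"
  proof
    assume "z \<in> A_add (coset x) (coset y)"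
    then obtain a b where ab: "a \<in> coset x" "b \<in> coset y" "z = (\<lambda>i. a i + b i)" by (auto simp: A_add_def)
    have "(\<lambda>i. z i - (x i + y i)) = (\<lambda>i. (\<lambda>i. a i - x i) i + (\<lambda>i. b i - y i) i)" using ab(3) by auto
    then show "z \<in> coset (\<lambda>i. x i + y i)" using ab(1,2) Pic_add by (simp add: coset_mem)
  next
    assume z: "z \<in> coset (\<lambda>i. x i + y i)"
    have "(\<lambda>i. (z i - y i) - x i) = (\<lambda>i. z i - (x i + y i))" by (auto simp: algebra_simps)
    then have a: "(\<lambda>i. z i - y i) \<in> coset x" using z by (simp add: coset_mem)
    have b: "y \<in> coset y" using Pic_zero by (simp add: coset_mem)
    show "z \<in> A_add (coset x) (coset y)" unfolding A_add_def
      by (rule CollectI, rule exI[of _ "\<lambda>i. z i - y i"], rule exI[of _ y]) (use a b in auto)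
  qed
qed

lemma Hc_xor: assumes "v \<in> V8" "w \<in> V8" shows "A_add (Hc v) (Hc w) = Hc (xorv v w)"
proof -
  have l: "length v = 8" "length w = 8" using assms by (auto simp: V8_def)
  have "(\<lambda>i. (hq v i + hq w i) - hq (xorv v w) i) \<in> Pic"
    unfolding Pic_def
  proof (intro CollectI conjI allI)
    show "supp8 (\<lambda>i. (hq v i + hq w i) - hq (xorv v w) i)" using l by (simp add: supp8_def hq_def)
  next
    fix i
    show "(hq v i + hq w i) - hq (xorv v w) i \<in> \<int>"
    proof (cases "i < 8")
      case True
      then show ?thesis using l by (cases "v ! i"; cases "w ! i") (auto simp: hq_def xorv_def)
    next
      case False then show ?thesis using l by (simp add: hq_def)
    qed
  qed
  then show ?thesis by (simp add: Hc_def A_add_coset coset_eq)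
qed

lemma pic_add2: "pic_form z (\<lambda>i. x i + y i) = pic_form z x + pic_form z y"
  using pic_add[of x y z] pic_sym by metis

lemma Lp_expand: "Lp_form (\<lambda>i. x i + v i) (\<lambda>i. x i + v i) = Lp_form x x + 2 * Lp_form x v + 2 * pic_form v v"
proof -
  have "pic_form (\<lambda>i. x i + v i) (\<lambda>i. x i + v i) = pic_form x x + pic_form x v + (pic_form v x + pic_form v v)"
    by (simp only: pic_add pic_add2)
  also have "\<dots> = pic_form x x + 2 * pic_form x v + pic_form v v" using pic_sym[of v x] by simp
  finally show ?thesis by (simp add: Lp_form_def algebra_simps)
qed

lemma q_is_coset: assumes "x \<in> Lplus_dual"
  shows "q_is (coset x) r \<longleftrightarrow> (\<exists>k::int. Lp_form x x = r + 2 * of_int k)"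
proof
  assume "q_is (coset x) r"
  then obtain y k where y: "y \<in> coset x" "Lp_form y y = r + 2 * of_int k" by (auto simp: q_is_def)
  define v where "v = (\<lambda>i. y i - x i)"
  have v: "v \<in> Pic" using y(1) by (simp add: coset_mem v_def)
  have yv: "y = (\<lambda>i. x i + v i)" by (simp add: v_def)
  have "Lp_form x v \<in> \<int>" using assms v by (simp add: Lplus_dual_def Lplus_def)
  then obtain a where a: "Lp_form x v = of_int a" by (elim Ints_cases)
  obtain b where b: "pic_form v v = of_int b" using Pic_form[OF v v] by (elim Ints_cases)
  have "Lp_form x x = r + 2 * of_int (k - a - b)" using y(2) a b Lp_expand[of x v] yv by simp
  then show "\<exists>k::int. Lp_form x x = r + 2 * of_int k" by blast
next
  assume "\<exists>k::int. Lp_form x x = r + 2 * of_int k"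
  moreover have "x \<in> coset x" using Pic_zero by (simp add: coset_mem)
  ultimately show "q_is (coset x) r" by (auto simp: q_is_def)
qed

definition Qz :: "bool list \<Rightarrow> int" where "Qz v = of_bool (hd v) - int (cnt (tl v))"

lemma sqh: "(of_bool a :: rat) / 2 * (of_bool a / 2) = of_bool a / 4" by (cases a) simp_all

lemma Lp_hq: assumes "length v = 8" shows "Lp_form (hq v) (hq v) = of_int (Qz v) / 2"
proof -
  obtain a0 a1 a2 a3 a4 a5 a6 a7 where v: "v = [a0,a1,a2,a3,a4,a5,a6,a7]" using len8[OF assms] by (elim exE) blast
  have h0: "hq v 0 = of_bool a0 / 2" by (simp add: hq_def v)
  have h1: "hq v 1 = of_bool a1 / 2" by (simp add: hq_def v)
  have h2: "hq v 2 = of_bool a2 / 2" by (simp add: hq_def v)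
  have h3: "hq v 3 = of_bool a3 / 2" by (simp add: hq_def v)
  have h4: "hq v 4 = of_bool a4 / 2" by (simp add: hq_def v)
  have h5: "hq v 5 = of_bool a5 / 2" by (simp add: hq_def v)
  have h6: "hq v 6 = of_bool a6 / 2" by (simp add: hq_def v)
  have h7: "hq v 7 = of_bool a7 / 2" by (simp add: hq_def v)
  have "Lp_form (hq v) (hq v) = 2 * (of_bool a0 / 2 * (of_bool a0 / 2) - (of_bool a1 / 2 * (of_bool a1 / 2) + of_bool a2 / 2 * (of_bool a2 / 2) + of_bool a3 / 2 * (of_bool a3 / 2) + of_bool a4 / 2 * (of_bool a4 / 2) + of_bool a5 / 2 * (of_bool a5 / 2) + of_bool a6 / 2 * (of_bool a6 / 2) + of_bool a7 / 2 * (of_bool a7 / 2)))"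
    unfolding Lp_form_def pic8 h0 h1 h2 h3 h4 h5 h6 h7 by (rule refl)
  also have "\<dots> = 2 * (of_bool a0 / 4 - (of_bool a1 / 4 + of_bool a2 / 4 + of_bool a3 / 4 + of_bool a4 / 4 + of_bool a5 / 4 + of_bool a6 / 4 + of_bool a7 / 4))" by (simp only: sqh)
  also have "\<dots> = of_int (Qz v) / 2"
  proof -
    have "(of_int (Qz v) :: rat) = of_bool a0 - (of_bool a1 + of_bool a2 + of_bool a3 + of_bool a4 + of_bool a5 + of_bool a6 + of_bool a7)" by (simp add: Qz_def v)
    then show ?thesis by (simp add: field_simps)
  qed
  finally show ?thesis .
qed

lemma Qz_Qm: "Qz v mod 4 = int (Qm v)"
proof -
  have "int (Qm v) = (of_bool (hd v) + 3 * int (cnt (tl v))) mod 4" by (simp add: Qm_def zmod_int)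
  also have "\<dots> = (Qz v + 4 * int (cnt (tl v))) mod 4" by (simp add: Qz_def algebra_simps)
  also have "\<dots> = Qz v mod 4" by simp
  finally show ?thesis by simp
qed

lemma q_is_Hc: assumes "length v = 8" "2 * r = of_int t"
  shows "q_is (Hc v) r \<longleftrightarrow> int (Qm v) = t mod 4"
proof -
  have "q_is (Hc v) r \<longleftrightarrow> (\<exists>k::int. of_int (Qz v) / 2 = r + 2 * of_int k)"
    using q_is_coset[OF hq_dual[OF assms(1)]] Lp_hq[OF assms(1)] by (simp add: Hc_def)
  also have "\<dots> \<longleftrightarrow> (\<exists>k::int. Qz v = t + 4 * k)"
  proof -
    have "of_int (Qz v) / 2 = r + 2 * of_int k \<longleftrightarrow> Qz v = t + 4 * k" for k
    proof -
      have "of_int (Qz v) / 2 = r + 2 * of_int k \<longleftrightarrow> (of_int (Qz v) :: rat) = of_int (t + 4 * k)"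
        using assms(2) by (auto simp: field_simps)
      then show ?thesis by (simp only: of_int_eq_iff)
    qed
    then show ?thesis by simp
  qed
  also have "\<dots> \<longleftrightarrow> Qz v mod 4 = t mod 4"
  proof
    assume "\<exists>k. Qz v = t + 4 * k"
    then obtain k where "Qz v = t + 4 * k" by blast
    then show "Qz v mod 4 = t mod 4" by simp
  next
    assume "Qz v mod 4 = t mod 4"
    then have "4 dvd (Qz v - t)" by (simp add: mod_eq_dvd_iff)
    then obtain k where "Qz v - t = 4 * k" by (elim dvdE)
    then have "Qz v = t + 4 * k" by simp
    then show "\<exists>k. Qz v = t + 4 * k" by blast
  qed
  finally show ?thesis by (simp only: Qz_Qm)
qed

lemma root_Pic: "r \<in> E7_roots \<Longrightarrow> r \<in> Pic" by (simp add: E7_roots_def)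
lemma root_sq: "r \<in> E7_roots \<Longrightarrow> pic_form r r = -2" by (simp add: E7_roots_def)

lemma pic_refl_r: "pic_form (refl r x) r = pic_form x r + pic_form x r * pic_form r r"
  unfolding refl_def by (rule pic_lin)

lemma refl_refl: assumes "pic_form r r = -2" shows "refl r (refl r x) = x"
proof -
  have "pic_form (refl r x) r = - pic_form x r" using pic_refl_r[of r x] assms by simp
  then show ?thesis by (simp add: refl_def[of r "refl r x"]) (simp add: refl_def algebra_simps)
qed

lemma refl_add: "refl r (\<lambda>i. x i + y i) = (\<lambda>i. refl r x i + refl r y i)"
  by (simp add: refl_def pic_add algebra_simps)

lemma pic_lin2: "pic_form z (\<lambda>i. x i + c * y i) = pic_form z x + c * pic_form z y"
  using pic_lin[of x c y z] pic_sym by metis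

lemma refl_form: assumes "pic_form r r = -2" shows "pic_form (refl r x) (refl r y) = pic_form x y"
proof -
  define a where "a = pic_form x r"
  define b where "b = pic_form y r"
  have "pic_form (refl r x) (refl r y) = pic_form x (refl r y) + a * pic_form r (refl r y)"
    unfolding refl_def[of r x] a_def by (rule pic_lin)
  also have "pic_form x (refl r y) = pic_form x y + b * pic_form x r"
    unfolding refl_def b_def by (rule pic_lin2)
  also have "pic_form r (refl r y) = pic_form r y + b * pic_form r r"
    unfolding refl_def b_def by (rule pic_lin2)
  finally show ?thesis using assms pic_sym[of r y] by (simp add: a_def b_def algebra_simps)
qed

lemma refl_Pic: "r \<in> Pic \<Longrightarrow> x \<in> Pic \<Longrightarrow> refl r x \<in> Pic"
  unfolding refl_def by (intro Pic_add Pic_scale Pic_form)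

lemma refl_dual: assumes r: "r \<in> Pic" and x: "x \<in> Lplus_dual" shows "refl r x \<in> Lplus_dual"
proof -
  have s: "supp8 x" and ii: "\<And>i. 2 * x i \<in> \<int>" using x by (auto simp: dual_char)
  have c: "2 * pic_form x r \<in> \<int>" using x r by (simp add: Lplus_dual_def Lplus_def Lp_form_def)
  have rs: "supp8 r" "\<And>i. r i \<in> \<int>" using r by (auto simp: Pic_def)
  have "2 * refl r x i \<in> \<int>" for i
  proof -
    have "2 * refl r x i = 2 * x i + (2 * pic_form x r) * r i" by (simp add: refl_def algebra_simps)
    also have "\<dots> \<in> \<int>" by (rule Ints_add[OF ii Ints_mult[OF c rs(2)]])
    finally show ?thesis .
  qed
  moreover have "supp8 (refl r x)" using s rs(1) by (simp add: supp8_def refl_def)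
  ultimately show ?thesis by (simp add: dual_char)
qed

lemma refl_image: assumes "pic_form r r = -2" "\<And>x. x \<in> S \<Longrightarrow> refl r x \<in> S" shows "refl r ` S = S"
proof
  show "refl r ` S \<subseteq> S" using assms(2) by auto
  show "S \<subseteq> refl r ` S"
  proof
    fix x assume "x \<in> S"
    then have "refl r (refl r x) = x" "refl r x \<in> S" using refl_refl[OF assms(1)] assms(2) by auto
    then show "x \<in> refl r ` S" by (metis imageI)
  qed
qed

lemma inj_refl: "pic_form r r = -2 \<Longrightarrow> inj (refl r)"
  by (metis inj_on_inverseI refl_refl)

lemma W_props: "w \<in> W_E7 \<Longrightarrow> inj w \<and> (\<forall>x y. w (\<lambda>i. x i + y i) = (\<lambda>i. w x i + w y i))
   \<and> (\<forall>x y. pic_form (w x) (w y) = pic_form x y) \<and> w ` Pic = Pic \<and> w ` Lplus_dual = Lplus_dual"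
proof (induction rule: W_E7.induct)
  case W_id then show ?case by simp
next
  case (W_step r w)
  have rr: "pic_form r r = -2" and rP: "r \<in> Pic" using W_step(1) by (auto simp: E7_roots_def)
  have i1: "refl r ` Pic = Pic" by (rule refl_image[OF rr]) (use refl_Pic[OF rP] in auto)
  have i2: "refl r ` Lplus_dual = Lplus_dual" by (rule refl_image[OF rr]) (use refl_dual[OF rP] in auto)
  show ?case
  proof (intro conjI allI)
    show "inj (refl r \<circ> w)" using W_step(3) inj_refl[OF rr] by (simp add: inj_compose)
  next
    fix x y show "(refl r \<circ> w) (\<lambda>i. x i + y i) = (\<lambda>i. (refl r \<circ> w) x i + (refl r \<circ> w) y i)"
      using W_step(3) by (simp add: refl_add)
  next
    fix x y show "pic_form ((refl r \<circ> w) x) ((refl r \<circ> w) y) = pic_form x y"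
      using W_step(3) by (simp add: refl_form[OF rr])
  next
    show "(refl r \<circ> w) ` Pic = Pic" using W_step(3) i1 by (metis image_comp)
  next
    show "(refl r \<circ> w) ` Lplus_dual = Lplus_dual" using W_step(3) i2 by (metis image_comp)
  qed
qed

lemma W_act_coset: assumes "w \<in> W_E7" shows "W_act w (coset x) = coset (w x)"
proof -
  have add: "\<And>x y. w (\<lambda>i. x i + y i) = (\<lambda>i. w x i + w y i)" and P: "w ` Pic = Pic"
    using W_props[OF assms] by auto
  show ?thesis
  proof (rule set_eqI)
    fix z
    show "z \<in> W_act w (coset x) \<longleftrightarrow> z \<in> coset (w x)"
    proof
      assume "z \<in> W_act w (coset x)"
      then obtain v where v: "v \<in> Pic" "z = w (\<lambda>i. x i + v i)" by (auto simp: W_act_def coset_def Lplus_def)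
      then have "z = (\<lambda>i. w x i + w v i)" "w v \<in> Pic" using add P by auto
      then show "z \<in> coset (w x)" by (auto simp: coset_def Lplus_def)
    next
      assume "z \<in> coset (w x)"
      then obtain v' where v': "v' \<in> Pic" "z = (\<lambda>i. w x i + v' i)" by (auto simp: coset_def Lplus_def)
      then obtain v where v: "v \<in> Pic" "v' = w v" using P by (metis imageE)
      then have "z = w (\<lambda>i. x i + v i)" using v' add by simp
      moreover have "(\<lambda>i. x i + v i) \<in> coset x" using v(1) unfolding coset_def Lplus_def by blast
      ultimately show "z \<in> W_act w (coset x)" by (simp add: W_act_def)
    qed
  qed
qed

lemma part1: assumes "w \<in> W_E7" shows "W_act w \<in> O_A"
proof -
  have inj: "inj w" and add: "\<And>x y. w (\<lambda>i. x i + y i) = (\<lambda>i. w x i + w y i)"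
    and form: "\<And>x y. pic_form (w x) (w y) = pic_form x y" and D: "w ` Lplus_dual = Lplus_dual"
    using W_props[OF assms] by auto
  have bij: "bij_betw (W_act w) A_Lp A_Lp"
  proof (rule bij_betw_imageI)
    show "inj_on (W_act w) A_Lp" using inj by (auto simp: inj_on_def W_act_def inj_image_eq_iff)
  next
    have "W_act w ` A_Lp = (\<lambda>x. coset (w x)) ` Lplus_dual" unfolding A_Lp_def image_comp comp_def
      using W_act_coset[OF assms] by simp
    also have "\<dots> = coset ` (w ` Lplus_dual)" by (simp add: image_comp comp_def)
    finally show "W_act w ` A_Lp = A_Lp" using D by (simp add: A_Lp_def)
  qed
  have hom: "W_act w (A_add a b) = A_add (W_act w a) (W_act w b)" for a b
  proof (rule set_eqI)
    fix z
    show "z \<in> W_act w (A_add a b) \<longleftrightarrow> z \<in> A_add (W_act w a) (W_act w b)"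
    proof
      assume "z \<in> W_act w (A_add a b)"
      then obtain x y where "x \<in> a" "y \<in> b" "z = w (\<lambda>i. x i + y i)" by (auto simp: W_act_def A_add_def)
      then show "z \<in> A_add (W_act w a) (W_act w b)" using add unfolding W_act_def A_add_def by blast
    next
      assume "z \<in> A_add (W_act w a) (W_act w b)"
      then obtain x y where "x \<in> a" "y \<in> b" "z = (\<lambda>i. w x i + w y i)" by (auto simp: W_act_def A_add_def)
      then show "z \<in> W_act w (A_add a b)" using add unfolding W_act_def A_add_def by (metis (mono_tags, lifting) CollectI imageI)
    qed
  qed
  have q: "q_is (W_act w a) r \<longleftrightarrow> q_is a r" for a r
    by (simp add: q_is_def W_act_def Lp_form_def form)
  show ?thesis using bij hom q by (simp add: O_A_def)
qed

definition mm :: "bool list \<Rightarrow> int list \<Rightarrow> int" where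
  "mm v r = of_bool (hd v) * hd r - sum_list (map2 (\<lambda>b x. of_bool b * x) (tl v) (tl r))"

lemma pic_hq_ofl: assumes "length v = 8" "length r = 8"
  shows "pic_form (hq v) (ofl r) = of_int (mm v r) / 2"
proof -
  obtain a0 a1 a2 a3 a4 a5 a6 a7 where v: "v = [a0,a1,a2,a3,a4,a5,a6,a7]" using len8[OF assms(1)] by (elim exE) blast
  obtain b0 b1 b2 b3 b4 b5 b6 b7 where r: "r = [b0,b1,b2,b3,b4,b5,b6,b7]"
  proof -
    from assms(2) have "\<exists>b0 b1 b2 b3 b4 b5 b6 b7. r = [b0,b1,b2,b3,b4,b5,b6,b7]"
      by (simp add: numeral_eq_Suc length_Suc_conv) blast
    then show ?thesis using that by (elim exE) blast
  qed
  have h0: "hq v 0 = of_bool a0 / 2" by (simp add: hq_def v)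
  have h1: "hq v 1 = of_bool a1 / 2" by (simp add: hq_def v)
  have h2: "hq v 2 = of_bool a2 / 2" by (simp add: hq_def v)
  have h3: "hq v 3 = of_bool a3 / 2" by (simp add: hq_def v)
  have h4: "hq v 4 = of_bool a4 / 2" by (simp add: hq_def v)
  have h5: "hq v 5 = of_bool a5 / 2" by (simp add: hq_def v)
  have h6: "hq v 6 = of_bool a6 / 2" by (simp add: hq_def v)
  have h7: "hq v 7 = of_bool a7 / 2" by (simp add: hq_def v)
  have o0: "ofl r 0 = of_int b0" by (simp add: ofl_def r)
  have o1: "ofl r 1 = of_int b1" by (simp add: ofl_def r)
  have o2: "ofl r 2 = of_int b2" by (simp add: ofl_def r)
  have o3: "ofl r 3 = of_int b3" by (simp add: ofl_def r)
  have o4: "ofl r 4 = of_int b4" by (simp add: ofl_def r)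
  have o5: "ofl r 5 = of_int b5" by (simp add: ofl_def r)
  have o6: "ofl r 6 = of_int b6" by (simp add: ofl_def r)
  have o7: "ofl r 7 = of_int b7" by (simp add: ofl_def r)
  have "pic_form (hq v) (ofl r) = of_bool a0 / 2 * of_int b0 - (of_bool a1 / 2 * of_int b1 + of_bool a2 / 2 * of_int b2
     + of_bool a3 / 2 * of_int b3 + of_bool a4 / 2 * of_int b4 + of_bool a5 / 2 * of_int b5 + of_bool a6 / 2 * of_int b6
     + of_bool a7 / 2 * of_int b7)"
    unfolding pic8 h0 h1 h2 h3 h4 h5 h6 h7 o0 o1 o2 o3 o4 o5 o6 o7 by (rule refl)
  moreover have "(of_int (mm v r) :: rat) = of_bool a0 * of_int b0 - (of_bool a1 * of_int b1 + of_bool a2 * of_int b2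
     + of_bool a3 * of_int b3 + of_bool a4 * of_int b4 + of_bool a5 * of_int b5 + of_bool a6 * of_int b6
     + of_bool a7 * of_int b7)" by (simp add: mm_def v r)
  ultimately show ?thesis by (simp add: field_simps)
qed

lemma par_sum: "length v = length r \<Longrightarrow>
  odd (sum_list (map2 (\<lambda>b x. of_bool b * x) v r) :: int) \<longleftrightarrow> odd (cnt (map2 (\<and>) (map odd r) v))"
  by (induction v r rule: list_induct2) auto

lemma mm_par: assumes "length v = 8" "length r = 8" shows "odd (mm v r) \<longleftrightarrow> dotv (map odd r) v"
proof -
  obtain x xs where v: "v = x # xs" using assms(1) by (cases v) auto
  obtain y ys where r: "r = y # ys" using assms(2) by (cases r) auto
  have l: "length xs = length ys" using assms v r by simp
  have "odd (mm v r) \<longleftrightarrow> odd (sum_list (map2 (\<lambda>b x. of_bool b * x) v r) :: int)"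
    by (simp add: mm_def v r)
  also have "\<dots> \<longleftrightarrow> dotv (map odd r) v" using par_sum[of v r] assms by (simp add: dotv_def)
  finally show ?thesis .
qed

lemma nth_xorv: "i < length v \<Longrightarrow> i < length w \<Longrightarrow> xorv v w ! i = (v ! i \<noteq> w ! i)"
  by (simp add: xorv_def)

lemma even_tv: "even (of_bool a + m * x - of_bool (if odd m then a \<noteq> odd x else a) :: int)"
  by (cases a; cases "odd m"; cases "odd x") auto

lemma refl_W: "r \<in> E7_roots \<Longrightarrow> refl r \<in> W_E7"
  using W_step[OF _ W_id, of r] by simp

lemma W_refl_Hc: assumes r8: "length r = 8" and rr: "ofl r \<in> E7_roots" and v: "v \<in> V8"
  shows "W_act (refl (ofl r)) (Hc v) = Hc (tv (map odd r) v)"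
proof -
  have v8: "length v = 8" using v by (simp add: V8_def)
  define m where "m = mm v r"
  have pm: "pic_form (hq v) (ofl r) = of_int m / 2" using pic_hq_ofl[OF v8 r8] by (simp add: m_def)
  have dm: "dotv (map odd r) v \<longleftrightarrow> odd m" using mm_par[OF v8 r8] by (simp add: m_def)
  have lt: "length (tv (map odd r) v) = 8" using v8 r8 by simp
  have tvi: "tv (map odd r) v ! i = (if odd m then v ! i \<noteq> odd (r ! i) else v ! i)" if "i < 8" for i
    using that v8 r8 dm by (simp add: tv_def nth_xorv)
  have "(\<lambda>i. refl (ofl r) (hq v) i - hq (tv (map odd r) v) i) \<in> Pic"
    unfolding Pic_def
  proof (intro CollectI conjI allI)
    show "supp8 (\<lambda>i. refl (ofl r) (hq v) i - hq (tv (map odd r) v) i)"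
      using v8 r8 lt by (simp add: supp8_def refl_def hq_def ofl_def)
  next
    fix i
    show "refl (ofl r) (hq v) i - hq (tv (map odd r) v) i \<in> \<int>"
    proof (cases "i < 8")
      case True
      have "refl (ofl r) (hq v) i - hq (tv (map odd r) v) i
        = of_int (of_bool (v ! i) + m * r ! i - of_bool (if odd m then v ! i \<noteq> odd (r ! i) else v ! i)) / 2"
        using True v8 r8 lt tvi[OF True] pm by (simp add: refl_def hq_alt ofl_def field_simps)
      also have "\<dots> \<in> \<int>" by (rule iffD2[OF half_Ints even_tv])
      finally show ?thesis .
    next
      case False then show ?thesis using v8 r8 lt by (simp add: refl_def hq_def ofl_def)
    qed
  qed
  then have "coset (refl (ofl r) (hq v)) = Hc (tv (map odd r) v)" by (simp add: Hc_def coset_eq)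
  then show ?thesis using W_act_coset[OF refl_W[OF rr]] by (simp add: Hc_def)
qed

definition wl :: "int list list \<Rightarrow> qvec \<Rightarrow> qvec" where
  "wl rs = foldr (\<lambda>r w. refl (ofl r) \<circ> w) rs id"

lemma wl_W: "\<forall>r\<in>set rs. ofl r \<in> E7_roots \<Longrightarrow> wl rs \<in> W_E7"
  by (induction rs) (auto simp: wl_def intro: W_id W_step)

lemma len_applyT8: "\<forall>p\<in>set ps. length p = 8 \<Longrightarrow> length v = 8 \<Longrightarrow> length (applyT ps v) = 8"
  by (induction ps) auto

lemma wl_act: "\<forall>r\<in>set rs. length r = 8 \<and> ofl r \<in> E7_roots \<Longrightarrow> v \<in> V8 \<Longrightarrow>
   W_act (wl rs) (Hc v) = Hc (applyT (map (map odd) rs) v)"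
proof (induction rs)
  case Nil then show ?case by (simp add: wl_def W_act_def)
next
  case (Cons r rs)
  have u: "applyT (map (map odd) rs) v \<in> V8" using Cons.prems len_applyT8[of "map (map odd) rs" v]
    by (auto simp: V8_def)
  have "W_act (wl (r # rs)) (Hc v) = refl (ofl r) ` W_act (wl rs) (Hc v)"
    by (simp add: wl_def W_act_def image_comp)
  also have "\<dots> = W_act (refl (ofl r)) (Hc (applyT (map (map odd) rs) v))"
    using Cons by (simp add: W_act_def)
  also have "\<dots> = Hc (applyT (map (map odd) (r # rs)) v)"
    using W_refl_Hc[OF _ _ u, of r] Cons.prems by simp
  finally show ?case .
qed

lemma canon_ofl: "canon = ofl canonl"
proof
  fix i
  show "canon i = ofl canonl i"
  proof (cases "i < 8")
    case True
    then have "i = 0 \<or> i = 1 \<or> i = 2 \<or> i = 3 \<or> i = 4 \<or> i = 5 \<or> i = 6 \<or> i = 7" by auto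
    then show ?thesis by (elim disjE) (simp_all add: canon_def ofl_def canonl_def)
  next
    case False then show ?thesis by (simp add: canon_def ofl_def canonl_def)
  qed
qed

lemma pic_ofl: assumes "length x = 8" "length y = 8" shows "pic_form (ofl x) (ofl y) = of_int (pfi x y)"
proof -
  obtain a0 a1 a2 a3 a4 a5 a6 a7 where x: "x = [a0,a1,a2,a3,a4,a5,a6,a7]"
  proof -
    from assms(1) have "\<exists>b0 b1 b2 b3 b4 b5 b6 b7. x = [b0,b1,b2,b3,b4,b5,b6,b7]"
      by (simp add: numeral_eq_Suc length_Suc_conv) blast
    then show ?thesis using that by (elim exE) blast
  qed
  obtain b0 b1 b2 b3 b4 b5 b6 b7 where y: "y = [b0,b1,b2,b3,b4,b5,b6,b7]"
  proof -
    from assms(2) have "\<exists>b0 b1 b2 b3 b4 b5 b6 b7. y = [b0,b1,b2,b3,b4,b5,b6,b7]"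
      by (simp add: numeral_eq_Suc length_Suc_conv) blast
    then show ?thesis using that by (elim exE) blast
  qed
  show ?thesis by (simp add: x y pic8 ofl_def pfi_def)
qed

lemma ofl_Pic: "length r = 8 \<Longrightarrow> ofl r \<in> Pic"
  by (auto simp: Pic_def supp8_def ofl_def)

lemma isroot_ok: assumes "isroot r" shows "length r = 8 \<and> ofl r \<in> E7_roots"
proof -
  have l: "length r = 8" using assms by (simp add: isroot_def)
  have "pic_form (ofl r) canon = 0" using assms l pic_ofl[OF l, of canonl] by (simp add: canon_ofl isroot_def canonl_def)
  moreover have "pic_form (ofl r) (ofl r) = -2" using assms pic_ofl[OF l l] by (simp add: isroot_def)
  ultimately show ?thesis using l ofl_Pic[OF l] by (simp add: E7_roots_def)
qed

lemma lift_ok: "rootc p \<Longrightarrow> length (lift p) = 8 \<and> ofl (lift p) \<in> E7_roots \<and> map odd (lift p) = p"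
  using fc_lift isroot_ok rootc_len[of p] V8l_set by (auto simp: V8_def)

lemma lift_list: "list_all rootc vs \<Longrightarrow>
   (\<forall>r\<in>set (map lift vs). length r = 8 \<and> ofl r \<in> E7_roots) \<and> map (map odd) (map lift vs) = vs"
  by (induction vs) (auto simp: lift_ok)

lemma O_A_rep: assumes fO: "f \<in> O_A"
  shows "\<exists>vs. list_all rootc vs \<and> (\<forall>v\<in>V8. f (Hc v) = Hc (applyT vs v))"
proof -
  have bij: "bij_betw f A_Lp A_Lp" and hom: "\<forall>a\<in>A_Lp. \<forall>b\<in>A_Lp. f (A_add a b) = A_add (f a) (f b)"
    and q: "\<forall>a\<in>A_Lp. \<forall>r. q_is (f a) r \<longleftrightarrow> q_is a r" using fO by (auto simp: O_A_def)
  define g where "g v = inv_into V8 Hc (f (Hc v))" for v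
  have HA: "Hc v \<in> A_Lp" if "v \<in> V8" for v using that A_Lp_eq by auto
  have fA: "f (Hc v) \<in> Hc ` V8" if "v \<in> V8" for v using bij HA[OF that] A_Lp_eq by (auto simp: bij_betw_def)
  have gV: "g v \<in> V8" if "v \<in> V8" for v using fA[OF that] by (simp add: g_def inv_into_into)
  have Hg: "Hc (g v) = f (Hc v)" if "v \<in> V8" for v using fA[OF that] by (simp add: g_def f_inv_into_f)
  have xV: "xorv a b \<in> V8" if "a \<in> V8" "b \<in> V8" for a b using that by (simp add: V8_def)
  have good: "good g" unfolding good_def
  proof (intro conjI ballI)
    fix v assume "v \<in> V8" then show "g v \<in> V8" by (rule gV)
  next
    fix a b assume a: "a \<in> V8" and b: "b \<in> V8"
    have "Hc (g (xorv a b)) = f (Hc (xorv a b))" using Hg xV[OF a b] by simp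
    also have "\<dots> = f (A_add (Hc a) (Hc b))" using Hc_xor[OF a b] by simp
    also have "\<dots> = A_add (f (Hc a)) (f (Hc b))" using hom HA a b by simp
    also have "\<dots> = A_add (Hc (g a)) (Hc (g b))" using Hg a b by simp
    also have "\<dots> = Hc (xorv (g a) (g b))" using Hc_xor gV a b by simp
    finally show "g (xorv a b) = xorv (g a) (g b)"
      using Hc_inj gV xV a b by (meson inj_onD)
  next
    fix v assume v: "v \<in> V8"
    define r :: rat where "r = of_nat (Qm v) / 2"
    have r2: "2 * r = of_int (int (Qm v))" by (simp add: r_def)
    have l: "length v = 8" "length (g v) = 8" using v gV[OF v] by (auto simp: V8_def)
    have "q_is (Hc v) r" using q_is_Hc[OF l(1) r2] Qm_lt[of v] by simp
    then have "q_is (Hc (g v)) r" using q HA[OF v] Hg[OF v] by simp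
    then have "int (Qm (g v)) = int (Qm v) mod 4" using q_is_Hc[OF l(2) r2] by simp
    then show "Qm (g v) = Qm v" using Qm_lt[of v] by simp
  next
    show "inj_on g V8"
    proof (rule inj_onI)
      fix a b assume a: "a \<in> V8" and b: "b \<in> V8" and e: "g a = g b"
      then have "f (Hc a) = f (Hc b)" using Hg by metis
      then have "Hc a = Hc b" using bij HA a b by (auto simp: bij_betw_def inj_on_def)
      then show "a = b" using Hc_inj a b by (meson inj_onD)
    qed
  qed
  obtain vs where vs: "list_all rootc vs" "\<forall>v\<in>V8. g v = applyT vs v" using model[OF good] by blast
  then show ?thesis using Hg by auto
qed

lemma part2: assumes "f \<in> O_A" shows "\<exists>w\<in>W_E7. \<forall>a\<in>A_Lp. f a = W_act w a"
proof -
  obtain vs where vs: "list_all rootc vs" "\<forall>v\<in>V8. f (Hc v) = Hc (applyT vs v)" using O_A_rep[OF assms] by blast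
  have L: "\<forall>r\<in>set (map lift vs). length r = 8 \<and> ofl r \<in> E7_roots" "map (map odd) (map lift vs) = vs"
    using lift_list[OF vs(1)] by auto
  have "wl (map lift vs) \<in> W_E7" using L(1) by (intro wl_W) auto
  moreover have "\<forall>a\<in>A_Lp. f a = W_act (wl (map lift vs)) a"
  proof
    fix a assume "a \<in> A_Lp"
    then obtain v where v: "v \<in> V8" "a = Hc v" using A_Lp_eq by auto
    then show "f a = W_act (wl (map lift vs)) a" using wl_act[OF L(1) v(1)] L(2) vs(2) by simp
  qed
  ultimately show ?thesis by blast
qed

lemma O_comp: assumes "f \<in> O_A" "h \<in> O_A" shows "f \<circ> h \<in> O_A"
proof -
  have f: "bij_betw f A_Lp A_Lp" "\<forall>a\<in>A_Lp. \<forall>b\<in>A_Lp. f (A_add a b) = A_add (f a) (f b)"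
    "\<forall>a\<in>A_Lp. \<forall>r. q_is (f a) r \<longleftrightarrow> q_is a r" using assms(1) by (auto simp: O_A_def)
  have h: "bij_betw h A_Lp A_Lp" "\<forall>a\<in>A_Lp. \<forall>b\<in>A_Lp. h (A_add a b) = A_add (h a) (h b)"
    "\<forall>a\<in>A_Lp. \<forall>r. q_is (h a) r \<longleftrightarrow> q_is a r" using assms(2) by (auto simp: O_A_def)
  have hA: "h a \<in> A_Lp" if "a \<in> A_Lp" for a using h(1) that by (auto simp: bij_betw_def)
  show ?thesis unfolding O_A_def
    using bij_betw_trans[OF h(1) f(1)] f(2,3) h(2,3) hA by auto
qed

lemma orbit_sub: assumes "a \<in> A_Lp" "w \<in> W_E7" shows "O_orbit (W_act w a) \<subseteq> O_orbit a"
proof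
  fix b assume "b \<in> O_orbit (W_act w a)"
  then obtain f where f: "f \<in> O_A" "b = f (W_act w a)" by (auto simp: O_orbit_def)
  then have "f \<circ> W_act w \<in> O_A" using O_comp part1[OF assms(2)] by blast
  then show "b \<in> O_orbit a" using f(2) unfolding O_orbit_def
    by (intro CollectI exI[of _ "f \<circ> W_act w"]) simp
qed

lemma HcA: "v \<in> V8 \<Longrightarrow> Hc v \<in> A_Lp" using A_Lp_eq by auto

lemma orbit_move: assumes "list_all rootc vs" "v \<in> V8"
  shows "O_orbit (Hc (applyT vs v)) = O_orbit (Hc v)"
proof -
  have r1: "list_all rootc (rev vs)" using assms(1) by simp
  have L: "\<forall>r\<in>set (map lift vs). length r = 8 \<and> ofl r \<in> E7_roots" "map (map odd) (map lift vs) = vs"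
    using lift_list[OF assms(1)] by auto
  have L': "\<forall>r\<in>set (map lift (rev vs)). length r = 8 \<and> ofl r \<in> E7_roots" "map (map odd) (map lift (rev vs)) = rev vs"
    using lift_list[OF r1] by auto
  have uV: "applyT vs v \<in> V8" using len_applyT[OF assms(1)] assms(2) by (simp add: V8_def)
  have e1: "W_act (wl (map lift vs)) (Hc v) = Hc (applyT vs v)" using wl_act[OF L(1) assms(2)] L(2) by simp
  have e2: "W_act (wl (map lift (rev vs))) (Hc (applyT vs v)) = Hc v"
    using wl_act[OF L'(1) uV] L'(2) applyT_rev[OF assms(1)] assms(2) by (simp add: V8_def)
  have w1: "wl (map lift vs) \<in> W_E7" using L(1) by (intro wl_W) auto
  have w2: "wl (map lift (rev vs)) \<in> W_E7" using L'(1) by (intro wl_W) auto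
  show ?thesis
    using orbit_sub[OF HcA[OF assms(2)] w1] orbit_sub[OF HcA[OF uV] w2] e1 e2 by auto
qed

lemma orbit_self: "a \<in> A_Lp \<Longrightarrow> a \<in> O_orbit a"
  using part1[OF W_id] unfolding O_orbit_def
  by (intro CollectI exI[of _ "W_act id"]) (simp add: W_act_def)

lemma orbit_fixed: assumes "v \<in> V8" "\<And>vs. list_all rootc vs \<Longrightarrow> applyT vs v = v"
  shows "O_orbit (Hc v) = {Hc v}"
proof
  show "O_orbit (Hc v) \<subseteq> {Hc v}"
  proof
    fix b assume "b \<in> O_orbit (Hc v)"
    then obtain f where f: "f \<in> O_A" "b = f (Hc v)" by (auto simp: O_orbit_def)
    obtain vs where "list_all rootc vs" "\<forall>v\<in>V8. f (Hc v) = Hc (applyT vs v)" using O_A_rep[OF f(1)] by blast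
    then show "b \<in> {Hc v}" using f(2) assms by simp
  qed
  show "{Hc v} \<subseteq> O_orbit (Hc v)" using orbit_self[OF HcA[OF assms(1)]] by simp
qed

lemma orbit_uu: "O_orbit (Hc uu) = {Hc uu}"
  by (rule orbit_fixed) (auto simp: V8_def applyT_uu)
lemma orbit_zeros: "O_orbit (Hc zeros) = {Hc zeros}"
  by (rule orbit_fixed) (auto simp: V8_def applyT_zeros)

lemma orb_class: assumes fc: "\<forall>v\<in>set V8l. Qm v = q \<and> v \<noteq> uu \<and> v \<noteq> zeros \<longrightarrow> reach 0 D P a v"
  and aV: "a \<in> V8" and v: "v \<in> V8" "Qm v = q" "v \<noteq> uu" "v \<noteq> zeros"
  shows "O_orbit (Hc v) = O_orbit (Hc a)"
proof -
  have "reach 0 D P a v" using fc v V8l_set by auto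
  then obtain vs where vs: "applyT vs a = v" "list_all (adm 0) vs" by (auto simp: reach_def)
  have "list_all rootc vs" using vs(2) adm_rootc by (auto simp: list_all_iff)
  then show ?thesis using orbit_move[OF _ aV] vs(1) by metis
qed

lemma C_set_Qm: assumes "2 * r = of_int t" shows "C_set r = Hc ` {v\<in>V8. int (Qm v) = t mod 4}"
proof -
  have "C_set r = {a \<in> Hc ` V8. q_is a r}" by (simp add: C_set_def A_Lp_eq)
  also have "\<dots> = Hc ` {v\<in>V8. q_is (Hc v) r}" by auto
  also have "{v\<in>V8. q_is (Hc v) r} = {v\<in>V8. int (Qm v) = t mod 4}"
    using q_is_Hc[OF _ assms] by (auto simp: V8_def)
  finally show ?thesis .
qed

lemma card_one: assumes "a \<in> S" "\<And>v. v \<in> S \<Longrightarrow> O_orbit (Hc v) = O_orbit (Hc a)"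
  shows "card (O_orbit ` Hc ` S) = 1"
proof -
  have "O_orbit ` Hc ` S = (\<lambda>v. O_orbit (Hc v)) ` S" by (simp add: image_comp)
  also have "\<dots> = (\<lambda>v. O_orbit (Hc a)) ` S" by (rule image_cong[OF refl assms(2)])
  also have "\<dots> = {O_orbit (Hc a)}" using assms(1) by auto
  finally show ?thesis by simp
qed

lemma card_two: assumes "a \<in> S" "b \<in> S" "O_orbit (Hc a) \<noteq> O_orbit (Hc b)"
  "\<And>v. v \<in> S \<Longrightarrow> O_orbit (Hc v) = O_orbit (Hc a) \<or> O_orbit (Hc v) = O_orbit (Hc b)"
  shows "card (O_orbit ` Hc ` S) = 2"
proof -
  have "O_orbit ` Hc ` S = {O_orbit (Hc a), O_orbit (Hc b)}"
  proof
    show "O_orbit ` Hc ` S \<subseteq> {O_orbit (Hc a), O_orbit (Hc b)}"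
    proof
      fix x assume "x \<in> O_orbit ` Hc ` S"
      then obtain v where "v \<in> S" "x = O_orbit (Hc v)" by blast
      then show "x \<in> {O_orbit (Hc a), O_orbit (Hc b)}" using assms(4) by blast
    qed
    show "{O_orbit (Hc a), O_orbit (Hc b)} \<subseteq> O_orbit ` Hc ` S" using assms(1,2) by blast
  qed
  then show ?thesis using assms(3) by simp
qed

lemma Qm_uu: "Qm uu = 2" by code_simp
lemma Qm_zeros: "Qm zeros = 0" by code_simp

lemma count_lemma_one:
  assumes fc: "\<forall>v\<in>set V8l. Qm v = q \<and> v \<noteq> uu \<and> v \<noteq> zeros \<longrightarrow> reach 0 D P a v"
    and aV: "a \<in> V8" and qa: "Qm a = q" and q2: "q \<noteq> 2" and q0: "q \<noteq> 0"
    and r: "2 * r = of_int t" and tq: "t mod 4 = int q"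
  shows "card (O_orbit ` C_set r) = 1"
proof -
  have C: "C_set r = Hc ` {v\<in>V8. Qm v = q}" using C_set_Qm[OF r] tq by simp
  show ?thesis unfolding C
  proof (rule card_one)
    show "a \<in> {v \<in> V8. Qm v = q}" using aV qa by simp
  next
    fix v assume v: "v \<in> {v \<in> V8. Qm v = q}"
    then have "v \<noteq> uu" "v \<noteq> zeros" using Qm_uu Qm_zeros q2 q0 by auto
    then show "O_orbit (Hc v) = O_orbit (Hc a)" using orb_class[OF fc aV] v by auto
  qed
qed

lemma count_lemma_two:
  assumes fc: "\<forall>v\<in>set V8l. Qm v = q \<and> v \<noteq> uu \<and> v \<noteq> zeros \<longrightarrow> reach 0 D P a v"
    and aV: "a \<in> V8" and qa: "Qm a = q" and sp: "s = uu \<or> s = zeros" and qs: "Qm s = q"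
    and asp: "a \<noteq> s"
    and r: "2 * r = of_int t" and tq: "t mod 4 = int q"
  shows "card (O_orbit ` C_set r) = 2"
proof -
  have C: "C_set r = Hc ` {v\<in>V8. Qm v = q}" using C_set_Qm[OF r] tq by simp
  have sV: "s \<in> V8" using sp by (auto simp: V8_def)
  have os: "O_orbit (Hc s) = {Hc s}" using sp orbit_uu orbit_zeros by auto
  show ?thesis unfolding C
  proof (rule card_two)
    show "s \<in> {v \<in> V8. Qm v = q}" using sV qs by simp
    show "a \<in> {v \<in> V8. Qm v = q}" using aV qa by simp
    have "Hc a \<in> O_orbit (Hc a)" using orbit_self[OF HcA[OF aV]] .
    moreover have "Hc a \<noteq> Hc s" using Hc_inj aV sV asp by (meson inj_onD)
    ultimately show "O_orbit (Hc s) \<noteq> O_orbit (Hc a)" using os by auto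
  next
    fix v assume v: "v \<in> {v \<in> V8. Qm v = q}"
    show "O_orbit (Hc v) = O_orbit (Hc s) \<or> O_orbit (Hc v) = O_orbit (Hc a)"
    proof (cases "v = s")
      case True then show ?thesis by simp
    next
      case False
      have "Qm uu = 2" "Qm zeros = 0" by (rule Qm_uu, rule Qm_zeros)
      then have "v \<noteq> uu \<and> v \<noteq> zeros" using False sp v qs by auto
      then show ?thesis using orb_class[OF fc aV] v by auto
    qed
  qed
qed

lemma rep_facts: "Qm [False, True, False, False, False, False, False, False] = 3" "Qm [True, False, False, False, False, False, False, False] = 1" "Qm [False, True, True, False, False, False, False, False] = 2" "Qm [False, True, True, True, True, False, False, False] = 0" "[False, True, True, False, False, False, False, False] \<noteq> uu" "[False, True, True, True, True, False, False, False] \<noteq> zeros"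
  by code_simp+

theorem lemma2p6:
  shows "(\<forall>w\<in>W_E7. W_act w \<in> O_A)
    \<and> (\<forall>f\<in>O_A. \<exists>w\<in>W_E7. \<forall>a\<in>A_Lp. f a = W_act w a)
    \<and> card (O_orbit ` C_set (-1/2)) = 1
    \<and> card (O_orbit ` C_set (1/2)) = 1
    \<and> card (O_orbit ` C_set 1) = 2
    \<and> card (O_orbit ` C_set 0) = 2"
proof (intro conjI)
  show "\<forall>w\<in>W_E7. W_act w \<in> O_A" using part1 by blast
  show "\<forall>f\<in>O_A. \<exists>w\<in>W_E7. \<forall>a\<in>A_Lp. f a = W_act w a" using part2 by blast
  show "card (O_orbit ` C_set (-1/2)) = 1"
    by (rule count_lemma_one[OF fc_orb3, where t = "-1"]) (simp_all add: V8_def rep_facts)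
  show "card (O_orbit ` C_set (1/2)) = 1"
    by (rule count_lemma_one[OF fc_orb1, where t = "1"]) (simp_all add: V8_def rep_facts)
  show "card (O_orbit ` C_set 1) = 2"
    by (rule count_lemma_two[OF fc_orb2, where s = uu and t = 2]) (simp_all add: V8_def Qm_uu rep_facts)
  show "card (O_orbit ` C_set 0) = 2"
    by (rule count_lemma_two[OF fc_orb0, where s = zeros and t = 0]) (simp_all add: V8_def Qm_zeros rep_facts)
qed

end
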